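(* The morphism $p_\Delta:\widetilde{U}_\Delta\to U_\Delta$ in $\mathbf{Gpd}^{\mathbf{G}}$ is an injective fibration.
   Context: $\mathbf{Gpd}^{\mathbf{G}}$ is the category of groupoids equipped with an involution and involution-preserving functors; its injective fibrations are the morphisms having the right lifting property with respect to all morphisms whose underlying functor is injective on objects and an equivalence of groupoids. $\kappa$ is an inaccessible cardinal. $U_\Delta$: objects $(A_0,A_1,\varphi)$ with $A_0,A_1$ sets of cardinality $<\kappa$ and $\varphi:A_0\to A_1$ a bijection; morphisms $(A_0,A_1,\varphi)\to(B_0,B_1,\psi)$ are pairs of bijections $(\rho_0,\rho_1)$ with $\psi\rho_0=\rho_1\varphi$; involution $(A_0,A_1,\varphi)\mapsto(A_1,A_0,\varphi^{-1})$, $(\rho_0,\rho_1)\mapsto(\rho_1,\rho_0)$. $\widetilde{U}_\Delta$: objects $(A_0,A_1,a,\varphi)$ with $a\in A_0$; morphisms those $(\rho_0,\rho_1)$ with $\rho_0(a)=b$; involution $(A_0,A_1,a,\varphi)\mapsto(A_1,A_0,\varphi(a),\varphi^{-1})$, $(\rho_0,\rho_1)\mapsto(\rho_1,\rho_0)$. $p_\Delta$ forgets the point $a$. *)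

theory Defs
  imports "HOL-Library.FuncSet"
begin

text \<open>A (possibly large, i.e. carrier-relativised) category: objects, arrows, domain,
  codomain, composition (gcomp g f = g after f) and identities.\<close>

record ('o, 'a) gpd =
  gob :: "'o set"
  gar :: "'a set"
  gdom :: "'a \<Rightarrow> 'o"
  gcod :: "'a \<Rightarrow> 'o"
  gcomp :: "'a \<Rightarrow> 'a \<Rightarrow> 'a"
  gid :: "'o \<Rightarrow> 'a"

text \<open>A groupoid equipped with an involution: sob/sar are the object and arrow parts
  of the involution functor.\<close>

record ('o, 'a) igpd = "('o, 'a) gpd" +
  sob :: "'o \<Rightarrow> 'o"
  sar :: "'a \<Rightarrow> 'a"

definition ghom where
  "ghom G x y = {f \<in> gar G. gdom G f = x \<and> gcod G f = y}"

definition groupoid where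
  "groupoid G \<longleftrightarrow>
     (\<forall>f \<in> gar G. gdom G f \<in> gob G \<and> gcod G f \<in> gob G) \<and>
     (\<forall>x \<in> gob G. gid G x \<in> ghom G x x) \<and>
     (\<forall>f \<in> gar G. \<forall>g \<in> gar G. gcod G f = gdom G g \<longrightarrow>
        gcomp G g f \<in> ghom G (gdom G f) (gcod G g)) \<and>
     (\<forall>f \<in> gar G. \<forall>g \<in> gar G. \<forall>h \<in> gar G. gcod G f = gdom G g \<longrightarrow> gcod G g = gdom G h \<longrightarrow>
        gcomp G h (gcomp G g f) = gcomp G (gcomp G h g) f) \<and>
     (\<forall>f \<in> gar G. gcomp G (gid G (gcod G f)) f = f \<and> gcomp G f (gid G (gdom G f)) = f) \<and>
     (\<forall>f \<in> gar G. \<exists>g \<in> ghom G (gcod G f) (gdom G f).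
        gcomp G g f = gid G (gdom G f) \<and> gcomp G f g = gid G (gcod G f))"

text \<open>Functors are pairs (object map, arrow map), considered on carriers only.\<close>

definition is_functor where
  "is_functor G H F \<longleftrightarrow>
     (\<forall>x \<in> gob G. fst F x \<in> gob H) \<and>
     (\<forall>f \<in> gar G. snd F f \<in> ghom H (fst F (gdom G f)) (fst F (gcod G f))) \<and>
     (\<forall>f \<in> gar G. \<forall>g \<in> gar G. gcod G f = gdom G g \<longrightarrow>
        snd F (gcomp G g f) = gcomp H (snd F g) (snd F f)) \<and>
     (\<forall>x \<in> gob G. snd F (gid G x) = gid H (fst F x))"

definition fcomp :: "('b \<Rightarrow> 'c) \<times> ('bb \<Rightarrow> 'cc) \<Rightarrow> ('a \<Rightarrow> 'b) \<times> ('aa \<Rightarrow> 'bb)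
    \<Rightarrow> ('a \<Rightarrow> 'c) \<times> ('aa \<Rightarrow> 'cc)" where
  "fcomp K F = (fst K \<circ> fst F, snd K \<circ> snd F)"

definition nat_iso where
  "nat_iso G H F1 F2 eta \<longleftrightarrow>
     (\<forall>x \<in> gob G. eta x \<in> ghom H (fst F1 x) (fst F2 x)) \<and>
     (\<forall>f \<in> gar G. gcomp H (eta (gcod G f)) (snd F1 f) = gcomp H (snd F2 f) (eta (gdom G f)))"

definition gpd_equivalence where
  "gpd_equivalence G H F \<longleftrightarrow> is_functor G H F \<and>
     (\<exists>K. is_functor H G K \<and>
        (\<exists>eta. nat_iso G G (id, id) (fcomp K F) eta) \<and>
        (\<exists>eps. nat_iso H H (fcomp F K) (id, id) eps))"

definition igroupoid where
  "igroupoid G \<longleftrightarrow> groupoid G \<and> is_functor G G (sob G, sar G) \<and>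
     (\<forall>x \<in> gob G. sob G (sob G x) = x) \<and> (\<forall>f \<in> gar G. sar G (sar G f) = f)"

definition igpd_mor where
  "igpd_mor G H F \<longleftrightarrow> igroupoid G \<and> igroupoid H \<and> is_functor G H F \<and>
     (\<forall>x \<in> gob G. fst F (sob G x) = sob H (fst F x)) \<and>
     (\<forall>f \<in> gar G. snd F (sar G f) = sar H (snd F f))"

text \<open>The generating class: morphisms whose underlying functor is injective on objects
  and an equivalence of groupoids.\<close>

definition inj_equiv where
  "inj_equiv A B i \<longleftrightarrow> igpd_mor A B i \<and> inj_on (fst i) (gob A) \<and> gpd_equivalence A B i"

definition has_rlp where
  "has_rlp A B i E X p \<longleftrightarrow>
     (\<forall>u v. igpd_mor A E u \<longrightarrow> igpd_mor B X v \<longrightarrow>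
        (\<forall>x \<in> gob A. fst p (fst u x) = fst v (fst i x)) \<longrightarrow>
        (\<forall>f \<in> gar A. snd p (snd u f) = snd v (snd i f)) \<longrightarrow>
        (\<exists>h. igpd_mor B E h \<and>
           (\<forall>x \<in> gob A. fst h (fst i x) = fst u x) \<and>
           (\<forall>f \<in> gar A. snd h (snd i f) = snd u f) \<and>
           (\<forall>y \<in> gob B. fst p (fst h y) = fst v y) \<and>
           (\<forall>g \<in> gar B. snd p (snd h g) = snd v g)))"

definition inaccessible :: "'k rel \<Rightarrow> bool" where
  "inaccessible \<kappa> \<longleftrightarrow> Card_order \<kappa> \<and> ordLess2 natLeq \<kappa> \<and> regularCard \<kappa> \<and>
     (\<forall>X. X \<subseteq> Field \<kappa> \<and> ordLess2 (card_of X) \<kappa> \<longrightarrow> ordLess2 (card_of (Pow X)) \<kappa>)"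

text \<open>Elements of the sets A0, A1 are taken from an arbitrary type 'u. Bijections are
  represented by functions that are extensional (undefined off their domain), so that
  equal bijections are equal functions.\<close>

type_synonym 'u uobj = "'u set \<times> 'u set \<times> ('u \<Rightarrow> 'u)"
type_synonym 'u uarr = "'u uobj \<times> 'u uobj \<times> ('u \<Rightarrow> 'u) \<times> ('u \<Rightarrow> 'u)"
type_synonym 'u tobj = "'u set \<times> 'u set \<times> 'u \<times> ('u \<Rightarrow> 'u)"
type_synonym 'u tarr = "'u tobj \<times> 'u tobj \<times> ('u \<Rightarrow> 'u) \<times> ('u \<Rightarrow> 'u)"

definition U_ob :: "'k rel \<Rightarrow> 'u uobj set" where
  "U_ob \<kappa> = {(A0, A1, \<phi>). ordLess2 (card_of A0) \<kappa> \<and> ordLess2 (card_of A1) \<kappa> \<and> bij_betw \<phi> A0 A1 \<and> \<phi> \<in> extensional A0}"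

definition U_mor :: "'u uobj \<Rightarrow> 'u uobj \<Rightarrow> ('u \<Rightarrow> 'u) \<Rightarrow> ('u \<Rightarrow> 'u) \<Rightarrow> bool" where
  "U_mor X Y r0 r1 \<longleftrightarrow> (case X of (A0, A1, \<phi>) \<Rightarrow> case Y of (B0, B1, \<psi>) \<Rightarrow>
     bij_betw r0 A0 B0 \<and> r0 \<in> extensional A0 \<and> bij_betw r1 A1 B1 \<and> r1 \<in> extensional A1 \<and>
     (\<forall>x \<in> A0. \<psi> (r0 x) = r1 (\<phi> x)))"

definition U_ar :: "'k rel \<Rightarrow> 'u uarr set" where
  "U_ar \<kappa> = {(X, Y, r0, r1). X \<in> U_ob \<kappa> \<and> Y \<in> U_ob \<kappa> \<and> U_mor X Y r0 r1}"

definition U_sob :: "'u uobj \<Rightarrow> 'u uobj" where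
  "U_sob X = (case X of (A0, A1, \<phi>) \<Rightarrow> (A1, A0, restrict (inv_into A0 \<phi>) A1))"

definition U_Delta :: "'k rel \<Rightarrow> ('u uobj, 'u uarr) igpd" where
  "U_Delta \<kappa> = \<lparr> gob = U_ob \<kappa>, gar = U_ar \<kappa>,
     gdom = (\<lambda>(X, Y, r0, r1). X), gcod = (\<lambda>(X, Y, r0, r1). Y),
     gcomp = (\<lambda>(Y', Z, s0, s1) (X, Y, r0, r1).
                (X, Z, restrict (s0 \<circ> r0) (fst X), restrict (s1 \<circ> r1) (fst (snd X)))),
     gid = (\<lambda>X. (X, X, restrict id (fst X), restrict id (fst (snd X)))),
     sob = U_sob,
     sar = (\<lambda>(X, Y, r0, r1). (U_sob X, U_sob Y, r1, r0)) \<rparr>"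

definition Ut_ob :: "'k rel \<Rightarrow> 'u tobj set" where
  "Ut_ob \<kappa> = {(A0, A1, a, \<phi>). (A0, A1, \<phi>) \<in> U_ob \<kappa> \<and> a \<in> A0}"

definition Ut_ar :: "'k rel \<Rightarrow> 'u tarr set" where
  "Ut_ar \<kappa> = {((A0, A1, a, \<phi>), (B0, B1, b, \<psi>), r0, r1).
       (A0, A1, a, \<phi>) \<in> Ut_ob \<kappa> \<and> (B0, B1, b, \<psi>) \<in> Ut_ob \<kappa> \<and>
       U_mor (A0, A1, \<phi>) (B0, B1, \<psi>) r0 r1 \<and> r0 a = b}"

definition Ut_sob :: "'u tobj \<Rightarrow> 'u tobj" where
  "Ut_sob X = (case X of (A0, A1, a, \<phi>) \<Rightarrow> (A1, A0, \<phi> a, restrict (inv_into A0 \<phi>) A1))"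

definition Ut_Delta :: "'k rel \<Rightarrow> ('u tobj, 'u tarr) igpd" where
  "Ut_Delta \<kappa> = \<lparr> gob = Ut_ob \<kappa>, gar = Ut_ar \<kappa>,
     gdom = (\<lambda>(X, Y, r0, r1). X), gcod = (\<lambda>(X, Y, r0, r1). Y),
     gcomp = (\<lambda>(Y', Z, s0, s1) (X, Y, r0, r1).
                (X, Z, restrict (s0 \<circ> r0) (fst X), restrict (s1 \<circ> r1) (fst (snd X)))),
     gid = (\<lambda>X. (X, X, restrict id (fst X), restrict id (fst (snd X)))),
     sob = Ut_sob,
     sar = (\<lambda>(X, Y, r0, r1). (Ut_sob X, Ut_sob Y, r1, r0)) \<rparr>"

definition forget_pt :: "'u tobj \<Rightarrow> 'u uobj" where
  "forget_pt X = (case X of (A0, A1, a, \<phi>) \<Rightarrow> (A0, A1, \<phi>))"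

definition p_Delta :: "('u tobj \<Rightarrow> 'u uobj) \<times> ('u tarr \<Rightarrow> 'u uarr)" where
  "p_Delta = (forget_pt, (\<lambda>(X, Y, r0, r1). (forget_pt X, forget_pt Y, r0, r1)))"

end

theory Submission
  imports Defs
begin

definition binv :: "'u set \<Rightarrow> 'u set \<Rightarrow> ('u \<Rightarrow> 'u) \<Rightarrow> 'u \<Rightarrow> 'u" where
  "binv A B f = restrict (inv_into A f) B"

lemma binv_bij: "bij_betw f A B \<Longrightarrow> bij_betw (binv A B f) B A"
  unfolding binv_def by (simp add: bij_betw_inv_into)

lemma binv_ext: "binv A B f \<in> extensional B"
  unfolding binv_def by simp

lemma bij_in: "bij_betw f A B \<Longrightarrow> a \<in> A \<Longrightarrow> f a \<in> B"
  by (simp add: bij_betwE)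

lemma binv_left: "bij_betw f A B \<Longrightarrow> a \<in> A \<Longrightarrow> binv A B f (f a) = a"
  unfolding binv_def by (simp add: bij_in bij_betw_inv_into_left)

lemma binv_right: "bij_betw f A B \<Longrightarrow> b \<in> B \<Longrightarrow> f (binv A B f b) = b"
  unfolding binv_def by (simp add: bij_betw_inv_into_right)

lemma binv_in: "bij_betw f A B \<Longrightarrow> b \<in> B \<Longrightarrow> binv A B f b \<in> A"
  by (rule bij_in[OF binv_bij])
lemma binv_binv: "bij_betw f A B \<Longrightarrow> f \<in> extensional A \<Longrightarrow> binv B A (binv A B f) = f"
proof (rule ext)
  fix x assume b: "bij_betw f A B" and e: "f \<in> extensional A"
  show "binv B A (binv A B f) x = f x"
  proof (cases "x \<in> A")
    case True
    have "f x \<in> B" using bij_in[OF b True] .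
    have "binv B A (binv A B f) (binv A B f (f x)) = f x"
      using binv_left[OF binv_bij[OF b] \<open>f x \<in> B\<close>] .
    then show ?thesis unfolding binv_left[OF b True] .
  next
    case False
    have "f x = undefined" using extensional_arb[OF e False] .
    moreover have "binv B A (binv A B f) x = undefined" using False by (simp add: binv_def)
    ultimately show ?thesis by simp
  qed
qed


lemma U_sob_eq: "U_sob (A0, A1, \<phi>) = (A1, A0, binv A0 A1 \<phi>)"
  by (simp add: U_sob_def binv_def)

lemma Ut_sob_eq: "Ut_sob (A0, A1, a, \<phi>) = (A1, A0, \<phi> a, binv A0 A1 \<phi>)"
  by (simp add: Ut_sob_def binv_def)

lemma U_ob_iff: "(A0, A1, \<phi>) \<in> U_ob \<kappa> \<longleftrightarrow> ordLess2 (card_of A0) \<kappa> \<and> ordLess2 (card_of A1) \<kappa> \<and> bij_betw \<phi> A0 A1 \<and> \<phi> \<in> extensional A0"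
  by (simp add: U_ob_def)

lemma Ut_ob_iff: "(A0, A1, a, \<phi>) \<in> Ut_ob \<kappa> \<longleftrightarrow> (A0, A1, \<phi>) \<in> U_ob \<kappa> \<and> a \<in> A0"
  by (simp add: Ut_ob_def)

lemma U_ar_iff: "(X, Y, r0, r1) \<in> U_ar \<kappa> \<longleftrightarrow> X \<in> U_ob \<kappa> \<and> Y \<in> U_ob \<kappa> \<and> U_mor X Y r0 r1"
  by (simp add: U_ar_def)

lemma Ut_ar_iff: "((A0, A1, a, \<phi>), (B0, B1, b, \<psi>), r0, r1) \<in> Ut_ar \<kappa> \<longleftrightarrow>
   (A0, A1, a, \<phi>) \<in> Ut_ob \<kappa> \<and> (B0, B1, b, \<psi>) \<in> Ut_ob \<kappa> \<and> U_mor (A0, A1, \<phi>) (B0, B1, \<psi>) r0 r1 \<and> r0 a = b"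
  by (simp add: Ut_ar_def)

lemma U_mor_iff: "U_mor (A0, A1, \<phi>) (B0, B1, \<psi>) r0 r1 \<longleftrightarrow>
     bij_betw r0 A0 B0 \<and> r0 \<in> extensional A0 \<and> bij_betw r1 A1 B1 \<and> r1 \<in> extensional A1 \<and>
     (\<forall>x \<in> A0. \<psi> (r0 x) = r1 (\<phi> x))"
  by (simp add: U_mor_def)

lemma U_sob_ob: "(A0, A1, \<phi>) \<in> U_ob \<kappa> \<Longrightarrow> (A1, A0, binv A0 A1 \<phi>) \<in> U_ob \<kappa>"
  by (simp add: U_ob_iff binv_bij binv_ext)

lemma U_mor_id: "(A0, A1, \<phi>) \<in> U_ob \<kappa> \<Longrightarrow> U_mor (A0, A1, \<phi>) (A0, A1, \<phi>) (restrict id A0) (restrict id A1)"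
  by (auto simp: U_mor_iff U_ob_iff bij_in)

lemma U_mor_comp: "U_mor (A0, A1, \<phi>) (B0, B1, \<psi>) r0 r1 \<Longrightarrow> U_mor (B0, B1, \<psi>) (C0, C1, \<chi>) s0 s1 \<Longrightarrow>
   bij_betw \<phi> A0 A1 \<Longrightarrow>
   U_mor (A0, A1, \<phi>) (C0, C1, \<chi>) (restrict (s0 \<circ> r0) A0) (restrict (s1 \<circ> r1) A1)"
  unfolding U_mor_iff
  by (auto simp: bij_betw_trans bij_in)

lemma U_mor_inv: "U_mor (A0, A1, \<phi>) (B0, B1, \<psi>) r0 r1 \<Longrightarrow> bij_betw \<phi> A0 A1 \<Longrightarrow>
   U_mor (B0, B1, \<psi>) (A0, A1, \<phi>) (binv A0 B0 r0) (binv A1 B1 r1)"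
  unfolding U_mor_iff
proof (intro conjI ballI; (elim conjE)?)
  fix y assume r0: "bij_betw r0 A0 B0" and r1: "bij_betw r1 A1 B1" and c: "\<forall>x\<in>A0. \<psi> (r0 x) = r1 (\<phi> x)"
    and p: "bij_betw \<phi> A0 A1" and y: "y \<in> B0"
  define x where "x = binv A0 B0 r0 y"
  have x: "x \<in> A0" "r0 x = y" using binv_in[OF r0 y] binv_right[OF r0 y] x_def by simp_all
  have "\<phi> x \<in> A1" using bij_in[OF p x(1)] .
  then show "\<phi> (binv A0 B0 r0 y) = binv A1 B1 r1 (\<psi> y)"
    using c x binv_left[OF r1] x_def by force
qed (auto simp: binv_bij binv_ext)

lemma U_mor_sob: "U_mor (A0, A1, \<phi>) (B0, B1, \<psi>) r0 r1 \<Longrightarrow> bij_betw \<phi> A0 A1 \<Longrightarrow> bij_betw \<psi> B0 B1 \<Longrightarrow>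
   U_mor (A1, A0, binv A0 A1 \<phi>) (B1, B0, binv B0 B1 \<psi>) r1 r0"
  unfolding U_mor_iff
proof (intro conjI ballI; (elim conjE)?)
  fix y assume r0: "bij_betw r0 A0 B0" and r1: "bij_betw r1 A1 B1" and c: "\<forall>x\<in>A0. \<psi> (r0 x) = r1 (\<phi> x)"
    and p: "bij_betw \<phi> A0 A1" and q: "bij_betw \<psi> B0 B1" and y: "y \<in> A1"
  define x where "x = binv A0 A1 \<phi> y"
  have x: "x \<in> A0" "\<phi> x = y" using binv_in[OF p y] binv_right[OF p y] x_def by simp_all
  have "r0 x \<in> B0" using bij_in[OF r0 x(1)] .
  then show "binv B0 B1 \<psi> (r1 y) = r0 (binv A0 A1 \<phi> y)"
    using c x binv_left[OF q] x_def by force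
qed auto

lemma U_simps[simp]:
  "gob (U_Delta \<kappa>) = U_ob \<kappa>" "gar (U_Delta \<kappa>) = U_ar \<kappa>"
  "gdom (U_Delta \<kappa>) (X, Y, r0, r1) = X" "gcod (U_Delta \<kappa>) (X, Y, r0, r1) = Y"
  "gcomp (U_Delta \<kappa>) (Y', Z, s0, s1) (X, Y, r0, r1) = (X, Z, restrict (s0 \<circ> r0) (fst X), restrict (s1 \<circ> r1) (fst (snd X)))"
  "gid (U_Delta \<kappa>) X = (X, X, restrict id (fst X), restrict id (fst (snd X)))"
  "sob (U_Delta \<kappa>) = U_sob"
  "sar (U_Delta \<kappa>) (X, Y, r0, r1) = (U_sob X, U_sob Y, r1, r0)"
  by (simp_all add: U_Delta_def)

lemma ghom_iff: "f \<in> ghom G x y \<longleftrightarrow> f \<in> gar G \<and> gdom G f = x \<and> gcod G f = y"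
  by (simp add: ghom_def)

lemma U_ar_cases:
  assumes "f \<in> U_ar \<kappa>"
  obtains A0 A1 \<phi> B0 B1 \<psi> r0 r1 where "f = ((A0, A1, \<phi>), (B0, B1, \<psi>), r0, r1)"
    "(A0, A1, \<phi>) \<in> U_ob \<kappa>" "(B0, B1, \<psi>) \<in> U_ob \<kappa>" "U_mor (A0, A1, \<phi>) (B0, B1, \<psi>) r0 r1"
proof -
  obtain X Y r0 r1 where f: "f = (X, Y, r0, r1)" by (cases f) auto
  obtain A0 A1 \<phi> where X: "X = (A0, A1, \<phi>)" by (cases X) auto
  obtain B0 B1 \<psi> where Y: "Y = (B0, B1, \<psi>)" by (cases Y) auto
  show ?thesis using that assms unfolding f X Y U_ar_iff by blast
qed

lemma restr_id_left: "r \<in> extensional A \<Longrightarrow> (\<And>x. x \<in> A \<Longrightarrow> r x \<in> B) \<Longrightarrow> restrict (restrict id B \<circ> r) A = r"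
proof (rule ext)
  fix x assume e: "r \<in> extensional A" and h: "\<And>x. x \<in> A \<Longrightarrow> r x \<in> B"
  show "restrict (restrict id B \<circ> r) A x = r x"
  proof (cases "x \<in> A")
    case True then show ?thesis using h[OF True] by simp
  next
    case False then show ?thesis using extensional_arb[OF e False] by simp
  qed
qed

lemma restr_id_right: "r \<in> extensional A \<Longrightarrow> restrict (r \<circ> restrict id A) A = r"
proof (rule ext)
  fix x assume e: "r \<in> extensional A"
  show "restrict (r \<circ> restrict id A) A x = r x"
  proof (cases "x \<in> A")
    case True then show ?thesis by simp
  next
    case False then show ?thesis using extensional_arb[OF e False] by simp
  qed
qed

lemma restr_assoc: "(\<And>x. x \<in> A \<Longrightarrow> r x \<in> B) \<Longrightarrow>
   restrict (t \<circ> restrict (s \<circ> r) A) A = restrict (restrict (t \<circ> s) B \<circ> r) A"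
  by (rule restrict_ext) simp

lemma restr_inv_left: "bij_betw r A B \<Longrightarrow> restrict (binv A B r \<circ> r) A = restrict id A"
  by (rule restrict_ext) (simp add: binv_left)

lemma restr_inv_right: "bij_betw r A B \<Longrightarrow> restrict (r \<circ> binv A B r) B = restrict id B"
  by (rule restrict_ext) (simp add: binv_right)

lemma UG1: "\<forall>f \<in> gar (U_Delta \<kappa>). gdom (U_Delta \<kappa>) f \<in> gob (U_Delta \<kappa>) \<and> gcod (U_Delta \<kappa>) f \<in> gob (U_Delta \<kappa>)"
proof
  fix f assume "f \<in> gar (U_Delta \<kappa>)"
  then have "f \<in> U_ar \<kappa>" by simp
  then show "gdom (U_Delta \<kappa>) f \<in> gob (U_Delta \<kappa>) \<and> gcod (U_Delta \<kappa>) f \<in> gob (U_Delta \<kappa>)"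
    by (rule U_ar_cases) simp
qed

lemma UG2: "\<forall>x \<in> gob (U_Delta \<kappa>). gid (U_Delta \<kappa>) x \<in> ghom (U_Delta \<kappa>) x x"
proof
  fix x assume "x \<in> gob (U_Delta \<kappa>)"
  moreover obtain A0 A1 \<phi> where X: "x = (A0, A1, \<phi>)" by (cases x) auto
  ultimately show "gid (U_Delta \<kappa>) x \<in> ghom (U_Delta \<kappa>) x x"
    by (simp add: ghom_iff U_ar_iff U_mor_id)
qed

lemma UG3: "\<forall>f \<in> gar (U_Delta \<kappa>). \<forall>g \<in> gar (U_Delta \<kappa>). gcod (U_Delta \<kappa>) f = gdom (U_Delta \<kappa>) g \<longrightarrow>
        gcomp (U_Delta \<kappa>) g f \<in> ghom (U_Delta \<kappa>) (gdom (U_Delta \<kappa>) f) (gcod (U_Delta \<kappa>) g)"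
proof (intro ballI impI)
  fix f g assume "f \<in> gar (U_Delta \<kappa>)" "g \<in> gar (U_Delta \<kappa>)" and c: "gcod (U_Delta \<kappa>) f = gdom (U_Delta \<kappa>) g"
  then have "f \<in> U_ar \<kappa>" "g \<in> U_ar \<kappa>" by simp_all
  from this(1) obtain A0 A1 \<phi> B0 B1 \<psi> r0 r1 where f: "f = ((A0, A1, \<phi>), (B0, B1, \<psi>), r0, r1)"
    "(A0, A1, \<phi>) \<in> U_ob \<kappa>" "(B0, B1, \<psi>) \<in> U_ob \<kappa>" "U_mor (A0, A1, \<phi>) (B0, B1, \<psi>) r0 r1"
    by (rule U_ar_cases)
  from \<open>g \<in> U_ar \<kappa>\<close> obtain B0' B1' \<psi>' C0 C1 \<chi> s0 s1 where g: "g = ((B0', B1', \<psi>'), (C0, C1, \<chi>), s0, s1)"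
    "(B0', B1', \<psi>') \<in> U_ob \<kappa>" "(C0, C1, \<chi>) \<in> U_ob \<kappa>" "U_mor (B0', B1', \<psi>') (C0, C1, \<chi>) s0 s1"
    by (rule U_ar_cases)
  have e: "B0' = B0" "B1' = B1" "\<psi>' = \<psi>" using c f g by simp_all
  have "bij_betw \<phi> A0 A1" using f(2) by (simp add: U_ob_iff)
  then have "U_mor (A0, A1, \<phi>) (C0, C1, \<chi>) (restrict (s0 \<circ> r0) A0) (restrict (s1 \<circ> r1) A1)"
    using U_mor_comp f(4) g(4) unfolding e by blast
  then show "gcomp (U_Delta \<kappa>) g f \<in> ghom (U_Delta \<kappa>) (gdom (U_Delta \<kappa>) f) (gcod (U_Delta \<kappa>) g)"
    using f g by (simp add: ghom_iff U_ar_iff)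
qed

lemma U_mor_maps0: "U_mor (A0, A1, \<phi>) (B0, B1, \<psi>) r0 r1 \<Longrightarrow> x \<in> A0 \<Longrightarrow> r0 x \<in> B0"
proof -
  assume "U_mor (A0, A1, \<phi>) (B0, B1, \<psi>) r0 r1" "x \<in> A0"
  then show ?thesis using bij_in[of r0 A0 B0 x] by (simp add: U_mor_iff)
qed
lemma U_mor_maps1: "U_mor (A0, A1, \<phi>) (B0, B1, \<psi>) r0 r1 \<Longrightarrow> x \<in> A1 \<Longrightarrow> r1 x \<in> B1"
proof -
  assume "U_mor (A0, A1, \<phi>) (B0, B1, \<psi>) r0 r1" "x \<in> A1"
  then show ?thesis using bij_in[of r1 A1 B1 x] by (simp add: U_mor_iff)
qed

lemma UG4: "\<forall>f \<in> gar (U_Delta \<kappa>). \<forall>g \<in> gar (U_Delta \<kappa>). \<forall>h \<in> gar (U_Delta \<kappa>). gcod (U_Delta \<kappa>) f = gdom (U_Delta \<kappa>) g \<longrightarrow> gcod (U_Delta \<kappa>) g = gdom (U_Delta \<kappa>) h \<longrightarrow>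
        gcomp (U_Delta \<kappa>) h (gcomp (U_Delta \<kappa>) g f) = gcomp (U_Delta \<kappa>) (gcomp (U_Delta \<kappa>) h g) f"
proof (intro ballI impI)
  fix f g h assume "f \<in> gar (U_Delta \<kappa>)" "g \<in> gar (U_Delta \<kappa>)" "h \<in> gar (U_Delta \<kappa>)"
    and c: "gcod (U_Delta \<kappa>) f = gdom (U_Delta \<kappa>) g" "gcod (U_Delta \<kappa>) g = gdom (U_Delta \<kappa>) h"
  then have "f \<in> U_ar \<kappa>" "g \<in> U_ar \<kappa>" "h \<in> U_ar \<kappa>" by simp_all
  from this(1) obtain A0 A1 \<phi> B0 B1 \<psi> r0 r1 where f: "f = ((A0, A1, \<phi>), (B0, B1, \<psi>), r0, r1)"
    "(A0, A1, \<phi>) \<in> U_ob \<kappa>" "(B0, B1, \<psi>) \<in> U_ob \<kappa>" "U_mor (A0, A1, \<phi>) (B0, B1, \<psi>) r0 r1"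
    by (rule U_ar_cases)
  from \<open>g \<in> U_ar \<kappa>\<close> obtain B0' B1' \<psi>' C0 C1 \<chi> s0 s1 where g: "g = ((B0', B1', \<psi>'), (C0, C1, \<chi>), s0, s1)"
    "(B0', B1', \<psi>') \<in> U_ob \<kappa>" "(C0, C1, \<chi>) \<in> U_ob \<kappa>" "U_mor (B0', B1', \<psi>') (C0, C1, \<chi>) s0 s1"
    by (rule U_ar_cases)
  from \<open>h \<in> U_ar \<kappa>\<close> obtain C0' C1' \<chi>' D0 D1 \<omega> t0 t1 where h: "h = ((C0', C1', \<chi>'), (D0, D1, \<omega>), t0, t1)"
    by (rule U_ar_cases)
  have e: "B0' = B0" "B1' = B1" "\<psi>' = \<psi>" using c f g by simp_all
  have "restrict (t0 \<circ> restrict (s0 \<circ> r0) A0) A0 = restrict (restrict (t0 \<circ> s0) B0 \<circ> r0) A0"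
    by (rule restr_assoc) (rule U_mor_maps0[OF f(4)])
  moreover have "restrict (t1 \<circ> restrict (s1 \<circ> r1) A1) A1 = restrict (restrict (t1 \<circ> s1) B1 \<circ> r1) A1"
    by (rule restr_assoc) (rule U_mor_maps1[OF f(4)])
  ultimately show "gcomp (U_Delta \<kappa>) h (gcomp (U_Delta \<kappa>) g f) = gcomp (U_Delta \<kappa>) (gcomp (U_Delta \<kappa>) h g) f"
    using f(1) g(1) h(1) e by simp
qed

lemma UG5: "\<forall>f \<in> gar (U_Delta \<kappa>). gcomp (U_Delta \<kappa>) (gid (U_Delta \<kappa>) (gcod (U_Delta \<kappa>) f)) f = f \<and> gcomp (U_Delta \<kappa>) f (gid (U_Delta \<kappa>) (gdom (U_Delta \<kappa>) f)) = f"
proof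
  fix f assume "f \<in> gar (U_Delta \<kappa>)"
  then have "f \<in> U_ar \<kappa>" by simp
  then obtain A0 A1 \<phi> B0 B1 \<psi> r0 r1 where f: "f = ((A0, A1, \<phi>), (B0, B1, \<psi>), r0, r1)"
    "(A0, A1, \<phi>) \<in> U_ob \<kappa>" "(B0, B1, \<psi>) \<in> U_ob \<kappa>" "U_mor (A0, A1, \<phi>) (B0, B1, \<psi>) r0 r1"
    by (rule U_ar_cases)
  have x: "r0 \<in> extensional A0" "r1 \<in> extensional A1" using f(4) by (simp_all add: U_mor_iff)
  have "restrict (restrict id B0 \<circ> r0) A0 = r0"
    by (rule restr_id_left[OF x(1)]) (rule U_mor_maps0[OF f(4)])
  moreover have "restrict (restrict id B1 \<circ> r1) A1 = r1"
    by (rule restr_id_left[OF x(2)]) (rule U_mor_maps1[OF f(4)])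
  moreover have "restrict (r0 \<circ> restrict id A0) A0 = r0" by (rule restr_id_right[OF x(1)])
  moreover have "restrict (r1 \<circ> restrict id A1) A1 = r1" by (rule restr_id_right[OF x(2)])
  ultimately show "gcomp (U_Delta \<kappa>) (gid (U_Delta \<kappa>) (gcod (U_Delta \<kappa>) f)) f = f \<and> gcomp (U_Delta \<kappa>) f (gid (U_Delta \<kappa>) (gdom (U_Delta \<kappa>) f)) = f"
    using f(1) by simp
qed

lemma UG6: "\<forall>f \<in> gar (U_Delta \<kappa>). \<exists>g \<in> ghom (U_Delta \<kappa>) (gcod (U_Delta \<kappa>) f) (gdom (U_Delta \<kappa>) f).
        gcomp (U_Delta \<kappa>) g f = gid (U_Delta \<kappa>) (gdom (U_Delta \<kappa>) f) \<and> gcomp (U_Delta \<kappa>) f g = gid (U_Delta \<kappa>) (gcod (U_Delta \<kappa>) f)"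
proof
  fix f assume "f \<in> gar (U_Delta \<kappa>)"
  then have "f \<in> U_ar \<kappa>" by simp
  then obtain A0 A1 \<phi> B0 B1 \<psi> r0 r1 where f: "f = ((A0, A1, \<phi>), (B0, B1, \<psi>), r0, r1)"
    "(A0, A1, \<phi>) \<in> U_ob \<kappa>" "(B0, B1, \<psi>) \<in> U_ob \<kappa>" "U_mor (A0, A1, \<phi>) (B0, B1, \<psi>) r0 r1"
    by (rule U_ar_cases)
  have b: "bij_betw r0 A0 B0" "bij_betw r1 A1 B1" using f(4) by (simp_all add: U_mor_iff)
  have p: "bij_betw \<phi> A0 A1" using f(2) by (simp add: U_ob_iff)
  define g where "g = ((B0, B1, \<psi>), (A0, A1, \<phi>), binv A0 B0 r0, binv A1 B1 r1)"
  have "g \<in> ghom (U_Delta \<kappa>) (gcod (U_Delta \<kappa>) f) (gdom (U_Delta \<kappa>) f)"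
    using f U_mor_inv[OF f(4) p] by (simp add: g_def ghom_iff U_ar_iff)
  moreover have "gcomp (U_Delta \<kappa>) g f = gid (U_Delta \<kappa>) (gdom (U_Delta \<kappa>) f)"
    using f(1) restr_inv_left[OF b(1)] restr_inv_left[OF b(2)] by (simp add: g_def)
  moreover have "gcomp (U_Delta \<kappa>) f g = gid (U_Delta \<kappa>) (gcod (U_Delta \<kappa>) f)"
    using f(1) restr_inv_right[OF b(1)] restr_inv_right[OF b(2)] by (simp add: g_def)
  ultimately show "\<exists>g \<in> ghom (U_Delta \<kappa>) (gcod (U_Delta \<kappa>) f) (gdom (U_Delta \<kappa>) f).
        gcomp (U_Delta \<kappa>) g f = gid (U_Delta \<kappa>) (gdom (U_Delta \<kappa>) f) \<and> gcomp (U_Delta \<kappa>) f g = gid (U_Delta \<kappa>) (gcod (U_Delta \<kappa>) f)"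
    by blast
qed

lemma U_groupoid: "groupoid (U_Delta \<kappa>)"
  unfolding groupoid_def by (intro conjI UG1 UG2 UG3 UG4 UG5 UG6)

lemma U_sob_ob': "x \<in> U_ob \<kappa> \<Longrightarrow> U_sob x \<in> U_ob \<kappa>"
  by (cases x) (simp add: U_sob_eq U_sob_ob)

lemma U_sob_sob: "x \<in> U_ob \<kappa> \<Longrightarrow> U_sob (U_sob x) = x"
  by (cases x) (simp add: U_sob_eq U_ob_iff binv_binv)

lemma U_involution: "is_functor (U_Delta \<kappa>) (U_Delta \<kappa>) (sob (U_Delta \<kappa>), sar (U_Delta \<kappa>))"
  unfolding is_functor_def
proof (intro conjI ballI impI)
  fix x assume "x \<in> gob (U_Delta \<kappa>)"
  then show "fst (sob (U_Delta \<kappa>), sar (U_Delta \<kappa>)) x \<in> gob (U_Delta \<kappa>)" by (simp add: U_sob_ob')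
next
  fix x assume "x \<in> gob (U_Delta \<kappa>)"
  obtain A0 A1 \<phi> where X: "x = (A0, A1, \<phi>)" by (cases x) auto
  show "snd (sob (U_Delta \<kappa>), sar (U_Delta \<kappa>)) (gid (U_Delta \<kappa>) x) = gid (U_Delta \<kappa>) (fst (sob (U_Delta \<kappa>), sar (U_Delta \<kappa>)) x)"
    by (simp add: X U_sob_eq)
next
  fix f assume "f \<in> gar (U_Delta \<kappa>)"
  then have "f \<in> U_ar \<kappa>" by simp
  then obtain A0 A1 \<phi> B0 B1 \<psi> r0 r1 where f: "f = ((A0, A1, \<phi>), (B0, B1, \<psi>), r0, r1)"
    "(A0, A1, \<phi>) \<in> U_ob \<kappa>" "(B0, B1, \<psi>) \<in> U_ob \<kappa>" "U_mor (A0, A1, \<phi>) (B0, B1, \<psi>) r0 r1"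
    by (rule U_ar_cases)
  have "U_mor (A1, A0, binv A0 A1 \<phi>) (B1, B0, binv B0 B1 \<psi>) r1 r0"
    using U_mor_sob[OF f(4)] f(2,3) by (simp add: U_ob_iff)
  then show "snd (sob (U_Delta \<kappa>), sar (U_Delta \<kappa>)) f \<in> ghom (U_Delta \<kappa>) (fst (sob (U_Delta \<kappa>), sar (U_Delta \<kappa>)) (gdom (U_Delta \<kappa>) f))
            (fst (sob (U_Delta \<kappa>), sar (U_Delta \<kappa>)) (gcod (U_Delta \<kappa>) f))"
    using f(1-3) by (simp add: ghom_iff U_ar_iff U_sob_eq U_sob_ob)
next
  fix f g assume "f \<in> gar (U_Delta \<kappa>)" "g \<in> gar (U_Delta \<kappa>)" and c: "gcod (U_Delta \<kappa>) f = gdom (U_Delta \<kappa>) g"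
  then have "f \<in> U_ar \<kappa>" "g \<in> U_ar \<kappa>" by simp_all
  from this(1) obtain A0 A1 \<phi> B0 B1 \<psi> r0 r1 where f: "f = ((A0, A1, \<phi>), (B0, B1, \<psi>), r0, r1)"
    by (rule U_ar_cases)
  from \<open>g \<in> U_ar \<kappa>\<close> obtain B0' B1' \<psi>' C0 C1 \<chi> s0 s1 where g: "g = ((B0', B1', \<psi>'), (C0, C1, \<chi>), s0, s1)"
    by (rule U_ar_cases)
  show "snd (sob (U_Delta \<kappa>), sar (U_Delta \<kappa>)) (gcomp (U_Delta \<kappa>) g f) =
        gcomp (U_Delta \<kappa>) (snd (sob (U_Delta \<kappa>), sar (U_Delta \<kappa>)) g) (snd (sob (U_Delta \<kappa>), sar (U_Delta \<kappa>)) f)"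
    by (simp add: f g U_sob_eq)
qed

lemma U_igroupoid: "igroupoid (U_Delta \<kappa>)"
  unfolding igroupoid_def
proof (intro conjI ballI)
  show "groupoid (U_Delta \<kappa>)" by (rule U_groupoid)
  show "is_functor (U_Delta \<kappa>) (U_Delta \<kappa>) (sob (U_Delta \<kappa>), sar (U_Delta \<kappa>))" by (rule U_involution)
next
  fix x assume "x \<in> gob (U_Delta \<kappa>)"
  then show "sob (U_Delta \<kappa>) (sob (U_Delta \<kappa>) x) = x" by (simp add: U_sob_sob)
next
  fix f assume "f \<in> gar (U_Delta \<kappa>)"
  then have "f \<in> U_ar \<kappa>" by simp
  then obtain A0 A1 \<phi> B0 B1 \<psi> r0 r1 where f: "f = ((A0, A1, \<phi>), (B0, B1, \<psi>), r0, r1)"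
    "(A0, A1, \<phi>) \<in> U_ob \<kappa>" "(B0, B1, \<psi>) \<in> U_ob \<kappa>" "U_mor (A0, A1, \<phi>) (B0, B1, \<psi>) r0 r1"
    by (rule U_ar_cases)
  show "sar (U_Delta \<kappa>) (sar (U_Delta \<kappa>) f) = f"
    using f(1-3) by (simp add: U_sob_sob)
qed

lemma Ut_simps[simp]:
  "gob (Ut_Delta \<kappa>) = Ut_ob \<kappa>" "gar (Ut_Delta \<kappa>) = Ut_ar \<kappa>"
  "gdom (Ut_Delta \<kappa>) (X, Y, r0, r1) = X" "gcod (Ut_Delta \<kappa>) (X, Y, r0, r1) = Y"
  "gcomp (Ut_Delta \<kappa>) (Y', Z, s0, s1) (X, Y, r0, r1) = (X, Z, restrict (s0 \<circ> r0) (fst X), restrict (s1 \<circ> r1) (fst (snd X)))"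
  "gid (Ut_Delta \<kappa>) X = (X, X, restrict id (fst X), restrict id (fst (snd X)))"
  "sob (Ut_Delta \<kappa>) = Ut_sob"
  "sar (Ut_Delta \<kappa>) (X, Y, r0, r1) = (Ut_sob X, Ut_sob Y, r1, r0)"
  by (simp_all add: Ut_Delta_def)

lemma Ut_ar_cases:
  assumes "f \<in> Ut_ar \<kappa>"
  obtains A0 A1 a \<phi> B0 B1 b \<psi> r0 r1 where "f = ((A0, A1, a, \<phi>), (B0, B1, b, \<psi>), r0, r1)"
    "(A0, A1, \<phi>) \<in> U_ob \<kappa>" "(B0, B1, \<psi>) \<in> U_ob \<kappa>" "U_mor (A0, A1, \<phi>) (B0, B1, \<psi>) r0 r1"
    "a \<in> A0" "b \<in> B0" "r0 a = b"
proof -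
  obtain X Y r0 r1 where f: "f = (X, Y, r0, r1)" by (cases f) auto
  obtain A0 A1 a \<phi> where X: "X = (A0, A1, a, \<phi>)" by (cases X) auto
  obtain B0 B1 b \<psi> where Y: "Y = (B0, B1, b, \<psi>)" by (cases Y) auto
  show ?thesis using that assms unfolding f X Y Ut_ar_iff Ut_ob_iff by blast
qed

lemma Ut_ob_cases:
  assumes "x \<in> Ut_ob \<kappa>"
  obtains A0 A1 a \<phi> where "x = (A0, A1, a, \<phi>)" "(A0, A1, \<phi>) \<in> U_ob \<kappa>" "a \<in> A0"
proof -
  obtain A0 A1 a \<phi> where X: "x = (A0, A1, a, \<phi>)" by (cases x) auto
  show ?thesis using that assms unfolding X Ut_ob_iff by blast
qed

lemma UtG1: "\<forall>f \<in> gar (Ut_Delta \<kappa>). gdom (Ut_Delta \<kappa>) f \<in> gob (Ut_Delta \<kappa>) \<and> gcod (Ut_Delta \<kappa>) f \<in> gob (Ut_Delta \<kappa>)"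
proof
  fix f assume "f \<in> gar (Ut_Delta \<kappa>)"
  then have "f \<in> Ut_ar \<kappa>" by simp
  then show "gdom (Ut_Delta \<kappa>) f \<in> gob (Ut_Delta \<kappa>) \<and> gcod (Ut_Delta \<kappa>) f \<in> gob (Ut_Delta \<kappa>)"
    by (rule Ut_ar_cases) (simp add: Ut_ob_iff)
qed

lemma UtG2: "\<forall>x \<in> gob (Ut_Delta \<kappa>). gid (Ut_Delta \<kappa>) x \<in> ghom (Ut_Delta \<kappa>) x x"
proof
  fix x assume "x \<in> gob (Ut_Delta \<kappa>)"
  then have "x \<in> Ut_ob \<kappa>" by simp
  then obtain A0 A1 a \<phi> where X: "x = (A0, A1, a, \<phi>)" "(A0, A1, \<phi>) \<in> U_ob \<kappa>" "a \<in> A0"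
    by (rule Ut_ob_cases)
  then show "gid (Ut_Delta \<kappa>) x \<in> ghom (Ut_Delta \<kappa>) x x"
    by (simp add: ghom_iff Ut_ar_iff Ut_ob_iff U_mor_id)
qed

lemma UtG3: "\<forall>f \<in> gar (Ut_Delta \<kappa>). \<forall>g \<in> gar (Ut_Delta \<kappa>). gcod (Ut_Delta \<kappa>) f = gdom (Ut_Delta \<kappa>) g \<longrightarrow>
        gcomp (Ut_Delta \<kappa>) g f \<in> ghom (Ut_Delta \<kappa>) (gdom (Ut_Delta \<kappa>) f) (gcod (Ut_Delta \<kappa>) g)"
proof (intro ballI impI)
  fix f g assume "f \<in> gar (Ut_Delta \<kappa>)" "g \<in> gar (Ut_Delta \<kappa>)" and c: "gcod (Ut_Delta \<kappa>) f = gdom (Ut_Delta \<kappa>) g"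
  then have "f \<in> Ut_ar \<kappa>" "g \<in> Ut_ar \<kappa>" by simp_all
  from this(1) obtain A0 A1 a \<phi> B0 B1 b \<psi> r0 r1 where f: "f = ((A0, A1, a, \<phi>), (B0, B1, b, \<psi>), r0, r1)"
    "(A0, A1, \<phi>) \<in> U_ob \<kappa>" "(B0, B1, \<psi>) \<in> U_ob \<kappa>" "U_mor (A0, A1, \<phi>) (B0, B1, \<psi>) r0 r1"
    "a \<in> A0" "b \<in> B0" "r0 a = b"
    by (rule Ut_ar_cases)
  from \<open>g \<in> Ut_ar \<kappa>\<close> obtain B0' B1' b' \<psi>' C0 C1 c \<chi> s0 s1 where g: "g = ((B0', B1', b', \<psi>'), (C0, C1, c, \<chi>), s0, s1)"
    "(B0', B1', \<psi>') \<in> U_ob \<kappa>" "(C0, C1, \<chi>) \<in> U_ob \<kappa>" "U_mor (B0', B1', \<psi>') (C0, C1, \<chi>) s0 s1"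
    "b' \<in> B0'" "c \<in> C0" "s0 b' = c"
    by (rule Ut_ar_cases)
  have e: "B0' = B0" "B1' = B1" "\<psi>' = \<psi>" "b' = b" using c f g by simp_all
  have "bij_betw \<phi> A0 A1" using f(2) by (simp add: U_ob_iff)
  then have "U_mor (A0, A1, \<phi>) (C0, C1, \<chi>) (restrict (s0 \<circ> r0) A0) (restrict (s1 \<circ> r1) A1)"
    using U_mor_comp f(4) g(4) unfolding e by blast
  moreover have "restrict (s0 \<circ> r0) A0 a = c" using f(5,7) g(7) e by simp
  ultimately show "gcomp (Ut_Delta \<kappa>) g f \<in> ghom (Ut_Delta \<kappa>) (gdom (Ut_Delta \<kappa>) f) (gcod (Ut_Delta \<kappa>) g)"
    using f g by (simp add: ghom_iff Ut_ar_iff Ut_ob_iff)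
qed

lemma UtG4: "\<forall>f \<in> gar (Ut_Delta \<kappa>). \<forall>g \<in> gar (Ut_Delta \<kappa>). \<forall>h \<in> gar (Ut_Delta \<kappa>). gcod (Ut_Delta \<kappa>) f = gdom (Ut_Delta \<kappa>) g \<longrightarrow> gcod (Ut_Delta \<kappa>) g = gdom (Ut_Delta \<kappa>) h \<longrightarrow>
        gcomp (Ut_Delta \<kappa>) h (gcomp (Ut_Delta \<kappa>) g f) = gcomp (Ut_Delta \<kappa>) (gcomp (Ut_Delta \<kappa>) h g) f"
proof (intro ballI impI)
  fix f g h assume "f \<in> gar (Ut_Delta \<kappa>)" "g \<in> gar (Ut_Delta \<kappa>)" "h \<in> gar (Ut_Delta \<kappa>)"
    and c: "gcod (Ut_Delta \<kappa>) f = gdom (Ut_Delta \<kappa>) g" "gcod (Ut_Delta \<kappa>) g = gdom (Ut_Delta \<kappa>) h"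
  then have "f \<in> Ut_ar \<kappa>" "g \<in> Ut_ar \<kappa>" "h \<in> Ut_ar \<kappa>" by simp_all
  from this(1) obtain A0 A1 a \<phi> B0 B1 b \<psi> r0 r1 where f: "f = ((A0, A1, a, \<phi>), (B0, B1, b, \<psi>), r0, r1)"
    "(A0, A1, \<phi>) \<in> U_ob \<kappa>" "(B0, B1, \<psi>) \<in> U_ob \<kappa>" "U_mor (A0, A1, \<phi>) (B0, B1, \<psi>) r0 r1"
    by (rule Ut_ar_cases)
  from \<open>g \<in> Ut_ar \<kappa>\<close> obtain B0' B1' b' \<psi>' C0 C1 c \<chi> s0 s1 where g: "g = ((B0', B1', b', \<psi>'), (C0, C1, c, \<chi>), s0, s1)"
    by (rule Ut_ar_cases)
  from \<open>h \<in> Ut_ar \<kappa>\<close> obtain C0' C1' c' \<chi>' D0 D1 d \<omega> t0 t1 where h: "h = ((C0', C1', c', \<chi>'), (D0, D1, d, \<omega>), t0, t1)"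
    by (rule Ut_ar_cases)
  have e: "B0' = B0" "B1' = B1" using c f g by simp_all
  have "restrict (t0 \<circ> restrict (s0 \<circ> r0) A0) A0 = restrict (restrict (t0 \<circ> s0) B0 \<circ> r0) A0"
    by (rule restr_assoc) (rule U_mor_maps0[OF f(4)])
  moreover have "restrict (t1 \<circ> restrict (s1 \<circ> r1) A1) A1 = restrict (restrict (t1 \<circ> s1) B1 \<circ> r1) A1"
    by (rule restr_assoc) (rule U_mor_maps1[OF f(4)])
  ultimately show "gcomp (Ut_Delta \<kappa>) h (gcomp (Ut_Delta \<kappa>) g f) = gcomp (Ut_Delta \<kappa>) (gcomp (Ut_Delta \<kappa>) h g) f"
    using f(1) g(1) h(1) e by simp
qed

lemma UtG5: "\<forall>f \<in> gar (Ut_Delta \<kappa>). gcomp (Ut_Delta \<kappa>) (gid (Ut_Delta \<kappa>) (gcod (Ut_Delta \<kappa>) f)) f = f \<and> gcomp (Ut_Delta \<kappa>) f (gid (Ut_Delta \<kappa>) (gdom (Ut_Delta \<kappa>) f)) = f"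
proof
  fix f assume "f \<in> gar (Ut_Delta \<kappa>)"
  then have "f \<in> Ut_ar \<kappa>" by simp
  then obtain A0 A1 a \<phi> B0 B1 b \<psi> r0 r1 where f: "f = ((A0, A1, a, \<phi>), (B0, B1, b, \<psi>), r0, r1)"
    "(A0, A1, \<phi>) \<in> U_ob \<kappa>" "(B0, B1, \<psi>) \<in> U_ob \<kappa>" "U_mor (A0, A1, \<phi>) (B0, B1, \<psi>) r0 r1"
    by (rule Ut_ar_cases)
  have x: "r0 \<in> extensional A0" "r1 \<in> extensional A1" using f(4) by (simp_all add: U_mor_iff)
  have "restrict (restrict id B0 \<circ> r0) A0 = r0"
    by (rule restr_id_left[OF x(1)]) (rule U_mor_maps0[OF f(4)])
  moreover have "restrict (restrict id B1 \<circ> r1) A1 = r1"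
    by (rule restr_id_left[OF x(2)]) (rule U_mor_maps1[OF f(4)])
  moreover have "restrict (r0 \<circ> restrict id A0) A0 = r0" by (rule restr_id_right[OF x(1)])
  moreover have "restrict (r1 \<circ> restrict id A1) A1 = r1" by (rule restr_id_right[OF x(2)])
  ultimately show "gcomp (Ut_Delta \<kappa>) (gid (Ut_Delta \<kappa>) (gcod (Ut_Delta \<kappa>) f)) f = f \<and> gcomp (Ut_Delta \<kappa>) f (gid (Ut_Delta \<kappa>) (gdom (Ut_Delta \<kappa>) f)) = f"
    using f(1) by simp
qed

lemma UtG6: "\<forall>f \<in> gar (Ut_Delta \<kappa>). \<exists>g \<in> ghom (Ut_Delta \<kappa>) (gcod (Ut_Delta \<kappa>) f) (gdom (Ut_Delta \<kappa>) f).
        gcomp (Ut_Delta \<kappa>) g f = gid (Ut_Delta \<kappa>) (gdom (Ut_Delta \<kappa>) f) \<and> gcomp (Ut_Delta \<kappa>) f g = gid (Ut_Delta \<kappa>) (gcod (Ut_Delta \<kappa>) f)"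
proof
  fix f assume "f \<in> gar (Ut_Delta \<kappa>)"
  then have "f \<in> Ut_ar \<kappa>" by simp
  then obtain A0 A1 a \<phi> B0 B1 b \<psi> r0 r1 where f: "f = ((A0, A1, a, \<phi>), (B0, B1, b, \<psi>), r0, r1)"
    "(A0, A1, \<phi>) \<in> U_ob \<kappa>" "(B0, B1, \<psi>) \<in> U_ob \<kappa>" "U_mor (A0, A1, \<phi>) (B0, B1, \<psi>) r0 r1"
    "a \<in> A0" "b \<in> B0" "r0 a = b"
    by (rule Ut_ar_cases)
  have b: "bij_betw r0 A0 B0" "bij_betw r1 A1 B1" using f(4) by (simp_all add: U_mor_iff)
  have p: "bij_betw \<phi> A0 A1" using f(2) by (simp add: U_ob_iff)
  have ba: "binv A0 B0 r0 b = a" using binv_left[OF b(1) f(5)] f(7) by simp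
  define g where "g = ((B0, B1, b, \<psi>), (A0, A1, a, \<phi>), binv A0 B0 r0, binv A1 B1 r1)"
  have "g \<in> ghom (Ut_Delta \<kappa>) (gcod (Ut_Delta \<kappa>) f) (gdom (Ut_Delta \<kappa>) f)"
    using f U_mor_inv[OF f(4) p] ba by (simp add: g_def ghom_iff Ut_ar_iff Ut_ob_iff)
  moreover have "gcomp (Ut_Delta \<kappa>) g f = gid (Ut_Delta \<kappa>) (gdom (Ut_Delta \<kappa>) f)"
    using f(1) restr_inv_left[OF b(1)] restr_inv_left[OF b(2)] by (simp add: g_def)
  moreover have "gcomp (Ut_Delta \<kappa>) f g = gid (Ut_Delta \<kappa>) (gcod (Ut_Delta \<kappa>) f)"
    using f(1) restr_inv_right[OF b(1)] restr_inv_right[OF b(2)] by (simp add: g_def)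
  ultimately show "\<exists>g \<in> ghom (Ut_Delta \<kappa>) (gcod (Ut_Delta \<kappa>) f) (gdom (Ut_Delta \<kappa>) f).
        gcomp (Ut_Delta \<kappa>) g f = gid (Ut_Delta \<kappa>) (gdom (Ut_Delta \<kappa>) f) \<and> gcomp (Ut_Delta \<kappa>) f g = gid (Ut_Delta \<kappa>) (gcod (Ut_Delta \<kappa>) f)"
    by blast
qed

lemma Ut_groupoid: "groupoid (Ut_Delta \<kappa>)"
  unfolding groupoid_def by (intro conjI UtG1 UtG2 UtG3 UtG4 UtG5 UtG6)

lemma Ut_sob_ob': "x \<in> Ut_ob \<kappa> \<Longrightarrow> Ut_sob x \<in> Ut_ob \<kappa>"
proof -
  assume "x \<in> Ut_ob \<kappa>"
  then obtain A0 A1 a \<phi> where X: "x = (A0, A1, a, \<phi>)" "(A0, A1, \<phi>) \<in> U_ob \<kappa>" "a \<in> A0"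
    by (rule Ut_ob_cases)
  have "\<phi> a \<in> A1" using X(2,3) bij_in[of \<phi> A0 A1 a] by (simp add: U_ob_iff)
  then show ?thesis using X by (simp add: Ut_sob_eq Ut_ob_iff U_sob_ob)
qed

lemma Ut_sob_sob: "x \<in> Ut_ob \<kappa> \<Longrightarrow> Ut_sob (Ut_sob x) = x"
proof -
  assume "x \<in> Ut_ob \<kappa>"
  then obtain A0 A1 a \<phi> where X: "x = (A0, A1, a, \<phi>)" "(A0, A1, \<phi>) \<in> U_ob \<kappa>" "a \<in> A0"
    by (rule Ut_ob_cases)
  have b: "bij_betw \<phi> A0 A1" "\<phi> \<in> extensional A0" using X(2) by (simp_all add: U_ob_iff)
  show ?thesis using X binv_left[OF b(1) X(3)] binv_binv[OF b] by (simp add: Ut_sob_eq)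
qed

lemma Ut_involution: "is_functor (Ut_Delta \<kappa>) (Ut_Delta \<kappa>) (sob (Ut_Delta \<kappa>), sar (Ut_Delta \<kappa>))"
  unfolding is_functor_def
proof (intro conjI ballI impI)
  fix x assume "x \<in> gob (Ut_Delta \<kappa>)"
  then show "fst (sob (Ut_Delta \<kappa>), sar (Ut_Delta \<kappa>)) x \<in> gob (Ut_Delta \<kappa>)" by (simp add: Ut_sob_ob')
next
  fix x assume "x \<in> gob (Ut_Delta \<kappa>)"
  obtain A0 A1 a \<phi> where X: "x = (A0, A1, a, \<phi>)" by (cases x) auto
  show "snd (sob (Ut_Delta \<kappa>), sar (Ut_Delta \<kappa>)) (gid (Ut_Delta \<kappa>) x) = gid (Ut_Delta \<kappa>) (fst (sob (Ut_Delta \<kappa>), sar (Ut_Delta \<kappa>)) x)"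
    by (simp add: X Ut_sob_eq)
next
  fix f assume "f \<in> gar (Ut_Delta \<kappa>)"
  then have "f \<in> Ut_ar \<kappa>" by simp
  then obtain A0 A1 a \<phi> B0 B1 b \<psi> r0 r1 where f: "f = ((A0, A1, a, \<phi>), (B0, B1, b, \<psi>), r0, r1)"
    "(A0, A1, \<phi>) \<in> U_ob \<kappa>" "(B0, B1, \<psi>) \<in> U_ob \<kappa>" "U_mor (A0, A1, \<phi>) (B0, B1, \<psi>) r0 r1"
    "a \<in> A0" "b \<in> B0" "r0 a = b"
    by (rule Ut_ar_cases)
  have m: "U_mor (A1, A0, binv A0 A1 \<phi>) (B1, B0, binv B0 B1 \<psi>) r1 r0"
    using U_mor_sob[OF f(4)] f(2,3) by (simp add: U_ob_iff)
  have pa: "\<phi> a \<in> A1" using f(2,5) bij_in[of \<phi> A0 A1 a] by (simp add: U_ob_iff)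
  have pb: "\<psi> b \<in> B1" using f(3,6) bij_in[of \<psi> B0 B1 b] by (simp add: U_ob_iff)
  have "\<forall>x\<in>A0. \<psi> (r0 x) = r1 (\<phi> x)" using f(4) by (simp add: U_mor_iff)
  then have "\<psi> (r0 a) = r1 (\<phi> a)" using f(5) by blast
  then have rr: "r1 (\<phi> a) = \<psi> b" using f(7) by simp
  show "snd (sob (Ut_Delta \<kappa>), sar (Ut_Delta \<kappa>)) f \<in> ghom (Ut_Delta \<kappa>) (fst (sob (Ut_Delta \<kappa>), sar (Ut_Delta \<kappa>)) (gdom (Ut_Delta \<kappa>) f))
            (fst (sob (Ut_Delta \<kappa>), sar (Ut_Delta \<kappa>)) (gcod (Ut_Delta \<kappa>) f))"
    using f(1-3) m pa pb rr by (simp add: ghom_iff Ut_ar_iff Ut_ob_iff Ut_sob_eq U_sob_ob)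
next
  fix f g assume "f \<in> gar (Ut_Delta \<kappa>)" "g \<in> gar (Ut_Delta \<kappa>)" and c: "gcod (Ut_Delta \<kappa>) f = gdom (Ut_Delta \<kappa>) g"
  then have "f \<in> Ut_ar \<kappa>" "g \<in> Ut_ar \<kappa>" by simp_all
  from this(1) obtain A0 A1 a \<phi> B0 B1 b \<psi> r0 r1 where f: "f = ((A0, A1, a, \<phi>), (B0, B1, b, \<psi>), r0, r1)"
    by (rule Ut_ar_cases)
  from \<open>g \<in> Ut_ar \<kappa>\<close> obtain B0' B1' b' \<psi>' C0 C1 c \<chi> s0 s1 where g: "g = ((B0', B1', b', \<psi>'), (C0, C1, c, \<chi>), s0, s1)"
    by (rule Ut_ar_cases)
  show "snd (sob (Ut_Delta \<kappa>), sar (Ut_Delta \<kappa>)) (gcomp (Ut_Delta \<kappa>) g f) =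
        gcomp (Ut_Delta \<kappa>) (snd (sob (Ut_Delta \<kappa>), sar (Ut_Delta \<kappa>)) g) (snd (sob (Ut_Delta \<kappa>), sar (Ut_Delta \<kappa>)) f)"
    by (simp add: f g Ut_sob_eq)
qed

lemma Ut_igroupoid: "igroupoid (Ut_Delta \<kappa>)"
  unfolding igroupoid_def
proof (intro conjI ballI)
  show "groupoid (Ut_Delta \<kappa>)" by (rule Ut_groupoid)
  show "is_functor (Ut_Delta \<kappa>) (Ut_Delta \<kappa>) (sob (Ut_Delta \<kappa>), sar (Ut_Delta \<kappa>))" by (rule Ut_involution)
next
  fix x assume "x \<in> gob (Ut_Delta \<kappa>)"
  then show "sob (Ut_Delta \<kappa>) (sob (Ut_Delta \<kappa>) x) = x" by (simp add: Ut_sob_sob)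
next
  fix f assume "f \<in> gar (Ut_Delta \<kappa>)"
  then have "f \<in> Ut_ar \<kappa>" by simp
  then obtain A0 A1 a \<phi> B0 B1 b \<psi> r0 r1 where f: "f = ((A0, A1, a, \<phi>), (B0, B1, b, \<psi>), r0, r1)"
    "(A0, A1, \<phi>) \<in> U_ob \<kappa>" "(B0, B1, \<psi>) \<in> U_ob \<kappa>" "U_mor (A0, A1, \<phi>) (B0, B1, \<psi>) r0 r1"
    "a \<in> A0" "b \<in> B0" "r0 a = b"
    by (rule Ut_ar_cases)
  have "(A0, A1, a, \<phi>) \<in> Ut_ob \<kappa>" "(B0, B1, b, \<psi>) \<in> Ut_ob \<kappa>" using f by (simp_all add: Ut_ob_iff)
  then show "sar (Ut_Delta \<kappa>) (sar (Ut_Delta \<kappa>) f) = f"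
    using f(1) by (simp add: Ut_sob_sob)
qed

lemma p_simps[simp]: "fst p_Delta = forget_pt" "snd p_Delta (X, Y, r0, r1) = (forget_pt X, forget_pt Y, r0, r1)"
  by (simp_all add: p_Delta_def)

lemma forget_eq[simp]: "forget_pt (A0, A1, a, \<phi>) = (A0, A1, \<phi>)"
  by (simp add: forget_pt_def)

lemma p_mor: "igpd_mor (Ut_Delta \<kappa> :: ('u tobj, 'u tarr) igpd) (U_Delta \<kappa>) p_Delta"
  unfolding igpd_mor_def is_functor_def
proof (intro conjI ballI impI Ut_igroupoid U_igroupoid)
  fix x :: "'u tobj" assume "x \<in> gob (Ut_Delta \<kappa>)"
  then have "x \<in> Ut_ob \<kappa>" by simp
  then obtain A0 A1 a \<phi> where X: "x = (A0, A1, a, \<phi>)" "(A0, A1, \<phi>) \<in> U_ob \<kappa>" "a \<in> A0"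
    by (rule Ut_ob_cases)
  show "fst p_Delta x \<in> gob (U_Delta \<kappa>)" using X by simp
  show "snd p_Delta (gid (Ut_Delta \<kappa>) x) = gid (U_Delta \<kappa>) (fst p_Delta x)" using X by simp
  show "fst p_Delta (sob (Ut_Delta \<kappa>) x) = sob (U_Delta \<kappa>) (fst p_Delta x)" using X by (simp add: Ut_sob_eq U_sob_eq)
next
  fix f :: "'u tarr" assume "f \<in> gar (Ut_Delta \<kappa>)"
  then have "f \<in> Ut_ar \<kappa>" by simp
  then obtain A0 A1 a \<phi> B0 B1 b \<psi> r0 r1 where f: "f = ((A0, A1, a, \<phi>), (B0, B1, b, \<psi>), r0, r1)"
    "(A0, A1, \<phi>) \<in> U_ob \<kappa>" "(B0, B1, \<psi>) \<in> U_ob \<kappa>" "U_mor (A0, A1, \<phi>) (B0, B1, \<psi>) r0 r1"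
    "a \<in> A0" "b \<in> B0" "r0 a = b"
    by (rule Ut_ar_cases)
  show "snd p_Delta f \<in> ghom (U_Delta \<kappa>) (fst p_Delta (gdom (Ut_Delta \<kappa>) f)) (fst p_Delta (gcod (Ut_Delta \<kappa>) f))"
    using f by (simp add: ghom_iff U_ar_iff)
  show "snd p_Delta (sar (Ut_Delta \<kappa>) f) = sar (U_Delta \<kappa>) (snd p_Delta f)"
    using f(1) by (simp add: Ut_sob_eq U_sob_eq)
next
  fix f g :: "'u tarr" assume "f \<in> gar (Ut_Delta \<kappa>)" "g \<in> gar (Ut_Delta \<kappa>)"
  then have "f \<in> Ut_ar \<kappa>" "g \<in> Ut_ar \<kappa>" by simp_all
  from this(1) obtain A0 A1 a \<phi> B0 B1 b \<psi> r0 r1 where f: "f = ((A0, A1, a, \<phi>), (B0, B1, b, \<psi>), r0, r1)"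
    by (rule Ut_ar_cases)
  from \<open>g \<in> Ut_ar \<kappa>\<close> obtain B0' B1' b' \<psi>' C0 C1 c \<chi> s0 s1 where g: "g = ((B0', B1', b', \<psi>'), (C0, C1, c, \<chi>), s0, s1)"
    by (rule Ut_ar_cases)
  show "snd p_Delta (gcomp (Ut_Delta \<kappa>) g f) = gcomp (U_Delta \<kappa>) (snd p_Delta g) (snd p_Delta f)"
    by (simp add: f g)
qed

lemma gp_comp: "groupoid G \<Longrightarrow> f \<in> ghom G a b \<Longrightarrow> g \<in> ghom G b c \<Longrightarrow> gcomp G g f \<in> ghom G a c"
  unfolding groupoid_def ghom_def by auto

lemma gp_id: "groupoid G \<Longrightarrow> a \<in> gob G \<Longrightarrow> gid G a \<in> ghom G a a"
  unfolding groupoid_def by auto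

lemma gp_obj: "groupoid G \<Longrightarrow> f \<in> ghom G a b \<Longrightarrow> a \<in> gob G \<and> b \<in> gob G"
  unfolding groupoid_def ghom_def by auto

lemma gp_ar: "f \<in> gar G \<Longrightarrow> f \<in> ghom G (gdom G f) (gcod G f)"
  unfolding ghom_def by auto

lemma gp_idl: "groupoid G \<Longrightarrow> f \<in> ghom G a b \<Longrightarrow> gcomp G (gid G b) f = f"
  unfolding groupoid_def ghom_def by auto

lemma gp_idr: "groupoid G \<Longrightarrow> f \<in> ghom G a b \<Longrightarrow> gcomp G f (gid G a) = f"
  unfolding groupoid_def ghom_def by auto

lemma gp_assoc: "groupoid G \<Longrightarrow> f \<in> ghom G a b \<Longrightarrow> g \<in> ghom G b c \<Longrightarrow> h \<in> ghom G c d \<Longrightarrow>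
   gcomp G h (gcomp G g f) = gcomp G (gcomp G h g) f"
  unfolding groupoid_def ghom_def by auto

lemma gp_inv: "groupoid G \<Longrightarrow> f \<in> ghom G a b \<Longrightarrow> \<exists>g\<in>ghom G b a. gcomp G g f = gid G a \<and> gcomp G f g = gid G b"
  unfolding groupoid_def ghom_def by auto

lemma gp_cancel_r:
  assumes G: "groupoid G" and f: "f \<in> ghom G a b" and g: "g1 \<in> ghom G b c" "g2 \<in> ghom G b c"
    and e: "gcomp G g1 f = gcomp G g2 f"
  shows "g1 = g2"
proof -
  obtain h where h: "h \<in> ghom G b a" "gcomp G f h = gid G b" using gp_inv[OF G f] by blast
  have "g1 = gcomp G g1 (gid G b)" using gp_idr[OF G g(1)] by simp
  also have "\<dots> = gcomp G (gcomp G g1 f) h" using gp_assoc[OF G h(1) f g(1)] h(2) by simp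
  also have "\<dots> = gcomp G (gcomp G g2 f) h" using e by simp
  also have "\<dots> = gcomp G g2 (gid G b)" using gp_assoc[OF G h(1) f g(2)] h(2) by simp
  also have "\<dots> = g2" using gp_idr[OF G g(2)] by simp
  finally show ?thesis .
qed

lemma fun_hom: "is_functor G H F \<Longrightarrow> f \<in> ghom G a b \<Longrightarrow> snd F f \<in> ghom H (fst F a) (fst F b)"
  unfolding is_functor_def ghom_def by auto

lemma fun_ob: "is_functor G H F \<Longrightarrow> a \<in> gob G \<Longrightarrow> fst F a \<in> gob H"
  unfolding is_functor_def by auto

lemma fun_comp: "is_functor G H F \<Longrightarrow> f \<in> ghom G a b \<Longrightarrow> g \<in> ghom G b c \<Longrightarrow>
   snd F (gcomp G g f) = gcomp H (snd F g) (snd F f)"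
  unfolding is_functor_def ghom_def by auto

lemma fun_id: "is_functor G H F \<Longrightarrow> a \<in> gob G \<Longrightarrow> snd F (gid G a) = gid H (fst F a)"
  unfolding is_functor_def by auto

lemma nat_comp: "nat_iso G H F1 F2 eta \<Longrightarrow> x \<in> gob G \<Longrightarrow> eta x \<in> ghom H (fst F1 x) (fst F2 x)"
  unfolding nat_iso_def by auto

lemma nat_nat: "nat_iso G H F1 F2 eta \<Longrightarrow> f \<in> ghom G a b \<Longrightarrow>
   gcomp H (eta b) (snd F1 f) = gcomp H (snd F2 f) (eta a)"
  unfolding nat_iso_def ghom_def by auto

lemma fcomp_simps[simp]: "fst (fcomp K F) = fst K \<circ> fst F" "snd (fcomp K F) = snd K \<circ> snd F"
  by (simp_all add: fcomp_def)

lemma equiv_faithful_K: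
  assumes GA: "groupoid A" and GB: "groupoid B" and iF: "is_functor A B i" and KF: "is_functor B A K"
    and eps: "nat_iso B B (fcomp i K) (id, id) eps"
    and a: "a1 \<in> ghom B p q" "a2 \<in> ghom B p q" and e: "snd K a1 = snd K a2"
  shows "a1 = a2"
proof -
  have p: "p \<in> gob B" using gp_obj[OF GB a(1)] by simp
  have ep: "eps p \<in> ghom B (fst i (fst K p)) p" using nat_comp[OF eps p] by simp
  have "gcomp B (eps q) (snd i (snd K a1)) = gcomp B a1 (eps p)" using nat_nat[OF eps a(1)] by simp
  moreover have "gcomp B (eps q) (snd i (snd K a2)) = gcomp B a2 (eps p)" using nat_nat[OF eps a(2)] by simp
  ultimately have "gcomp B a1 (eps p) = gcomp B a2 (eps p)" using e by simp
  then show ?thesis using gp_cancel_r[OF GB ep a] by simp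
qed

lemma equiv_full:
  assumes GA: "groupoid A" and GB: "groupoid B" and iF: "is_functor A B i" and KF: "is_functor B A K"
    and eta: "nat_iso A A (id, id) (fcomp K i) eta"
    and eps: "nat_iso B B (fcomp i K) (id, id) eps"
    and x: "x \<in> gob A" "x' \<in> gob A" and f: "f \<in> ghom B (fst i x) (fst i x')"
  shows "\<exists>k \<in> ghom A x x'. snd i k = f"
proof -
  have ex: "eta x \<in> ghom A x (fst K (fst i x))" using nat_comp[OF eta x(1)] by simp
  have ex': "eta x' \<in> ghom A x' (fst K (fst i x'))" using nat_comp[OF eta x(2)] by simp
  obtain e' where e': "e' \<in> ghom A (fst K (fst i x')) x'" "gcomp A (eta x') e' = gid A (fst K (fst i x'))"
    using gp_inv[OF GA ex'] by blast
  have Kf: "snd K f \<in> ghom A (fst K (fst i x)) (fst K (fst i x'))" using fun_hom[OF KF f] .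
  define k where "k = gcomp A e' (gcomp A (snd K f) (eta x))"
  have c1: "gcomp A (snd K f) (eta x) \<in> ghom A x (fst K (fst i x'))" using gp_comp[OF GA ex Kf] .
  have k: "k \<in> ghom A x x'" unfolding k_def using gp_comp[OF GA c1 e'(1)] .
  have ik: "snd i k \<in> ghom B (fst i x) (fst i x')" using fun_hom[OF iF k] .
  have "gcomp A (eta x') k = gcomp A (snd K (snd i k)) (eta x)" using nat_nat[OF eta k] by simp
  moreover have "gcomp A (eta x') k = gcomp A (snd K f) (eta x)"
  proof -
    have "gcomp A (eta x') k = gcomp A (gcomp A (eta x') e') (gcomp A (snd K f) (eta x))"
      unfolding k_def using gp_assoc[OF GA c1 e'(1) ex'] .
    also have "\<dots> = gcomp A (snd K f) (eta x)" using e'(2) gp_idl[OF GA c1] by simp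
    finally show ?thesis .
  qed
  ultimately have "gcomp A (snd K (snd i k)) (eta x) = gcomp A (snd K f) (eta x)" by simp
  then have "snd K (snd i k) = snd K f" using gp_cancel_r[OF GA ex fun_hom[OF KF ik] Kf] by simp
  then have "snd i k = f" using equiv_faithful_K[OF GA GB iF KF eps ik f] by simp
  then show ?thesis using k by blast
qed

definition tpt :: "'u tobj \<Rightarrow> 'u" where "tpt X = fst (snd (snd X))"
definition addpt :: "'u uobj \<Rightarrow> 'u \<Rightarrow> 'u tobj" where "addpt X a = (fst X, fst (snd X), a, snd (snd X))"
definition ar0 :: "'x \<times> 'y \<times> 'r \<times> 's \<Rightarrow> 'r" where "ar0 g = fst (snd (snd g))"
definition ar1 :: "'x \<times> 'y \<times> 'r \<times> 's \<Rightarrow> 's" where "ar1 g = snd (snd (snd g))"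

lemma ar_simps[simp]: "ar0 (X, Y, r0, r1) = r0" "ar1 (X, Y, r0, r1) = r1"
  by (simp_all add: ar0_def ar1_def)

lemma tpt_simp[simp]: "tpt (A0, A1, a, \<phi>) = a" by (simp add: tpt_def)
lemma addpt_simp[simp]: "addpt (A0, A1, \<phi>) a = (A0, A1, a, \<phi>)" by (simp add: addpt_def)

lemma U_ghom_shape:
  assumes "g \<in> ghom (U_Delta \<kappa>) X Y"
  shows "g = (X, Y, ar0 g, ar1 g)" "U_mor X Y (ar0 g) (ar1 g)" "X \<in> U_ob \<kappa>" "Y \<in> U_ob \<kappa>"
proof -
  obtain X' Y' r0 r1 where g: "g = (X', Y', r0, r1)" by (cases g) auto
  show "g = (X, Y, ar0 g, ar1 g)" "U_mor X Y (ar0 g) (ar1 g)" "X \<in> U_ob \<kappa>" "Y \<in> U_ob \<kappa>"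
    using assms unfolding g by (auto simp: ghom_iff U_ar_iff)
qed

lemma Ut_ghom_shape:
  assumes "g \<in> ghom (Ut_Delta \<kappa>) X Y"
  shows "g = (X, Y, ar0 g, ar1 g)" "U_mor (forget_pt X) (forget_pt Y) (ar0 g) (ar1 g)"
    "ar0 g (tpt X) = tpt Y" "X \<in> Ut_ob \<kappa>" "Y \<in> Ut_ob \<kappa>"
proof -
  have "g \<in> Ut_ar \<kappa>" using assms by (simp add: ghom_iff)
  then obtain A0 A1 a \<phi> B0 B1 b \<psi> r0 r1 where f: "g = ((A0, A1, a, \<phi>), (B0, B1, b, \<psi>), r0, r1)"
    "(A0, A1, \<phi>) \<in> U_ob \<kappa>" "(B0, B1, \<psi>) \<in> U_ob \<kappa>" "U_mor (A0, A1, \<phi>) (B0, B1, \<psi>) r0 r1"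
    "a \<in> A0" "b \<in> B0" "r0 a = b"
    by (rule Ut_ar_cases)
  have XY: "X = (A0, A1, a, \<phi>)" "Y = (B0, B1, b, \<psi>)" using assms f(1) by (simp_all add: ghom_iff)
  show "g = (X, Y, ar0 g, ar1 g)" "U_mor (forget_pt X) (forget_pt Y) (ar0 g) (ar1 g)"
    "ar0 g (tpt X) = tpt Y" "X \<in> Ut_ob \<kappa>" "Y \<in> Ut_ob \<kappa>"
    using f XY by (simp_all add: Ut_ob_iff)
qed

lemma ar0_U_comp: "ar0 (gcomp (U_Delta \<kappa>) g f) = restrict (ar0 g \<circ> ar0 f) (fst (gdom (U_Delta \<kappa>) f))"
  by (cases f; cases g) simp
lemma ar1_U_comp: "ar1 (gcomp (U_Delta \<kappa>) g f) = restrict (ar1 g \<circ> ar1 f) (fst (snd (gdom (U_Delta \<kappa>) f)))"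
  by (cases f; cases g) simp
lemma ar_U_id: "ar0 (gid (U_Delta \<kappa>) X) = restrict id (fst X)" "ar1 (gid (U_Delta \<kappa>) X) = restrict id (fst (snd X))"
  by simp_all
lemma ar_U_sar: "ar0 (sar (U_Delta \<kappa>) g) = ar1 g" "ar1 (sar (U_Delta \<kappa>) g) = ar0 g"
  by (cases g; simp)+
lemma ar_p: "ar0 (snd p_Delta g) = ar0 g" "ar1 (snd p_Delta g) = ar1 g"
  by (cases g; simp)+

lemma forget_addpt[simp]: "forget_pt (addpt X a) = X"
  by (cases X) simp

lemma Ut_ob_decomp: "x \<in> Ut_ob \<kappa> \<Longrightarrow> x = addpt (forget_pt x) (tpt x) \<and> tpt x \<in> fst (forget_pt x) \<and> forget_pt x \<in> U_ob \<kappa>"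
  by (erule Ut_ob_cases) simp

lemma addpt_Ut_ob: "X \<in> U_ob \<kappa> \<Longrightarrow> a \<in> fst X \<Longrightarrow> addpt X a \<in> Ut_ob \<kappa>"
  by (cases X) (simp add: Ut_ob_iff)

lemma Ut_sob_addpt: "Ut_sob (addpt X a) = addpt (U_sob X) (snd (snd X) a)"
  by (cases X) (simp add: Ut_sob_eq U_sob_eq)

locale lift_setup =
  fixes \<kappa> :: "'k rel" and A :: "('ao, 'aa) igpd" and B :: "('bo, 'ba) igpd"
    and i :: "('ao \<Rightarrow> 'bo) \<times> ('aa \<Rightarrow> 'ba)"
    and K :: "('bo \<Rightarrow> 'ao) \<times> ('ba \<Rightarrow> 'aa)"
    and eta :: "'ao \<Rightarrow> 'aa" and eps :: "'bo \<Rightarrow> 'ba"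
    and u :: "('ao \<Rightarrow> 'u tobj) \<times> ('aa \<Rightarrow> 'u tarr)"
    and v :: "('bo \<Rightarrow> 'u uobj) \<times> ('ba \<Rightarrow> 'u uarr)"
  assumes im: "igpd_mor A B i"
    and KF: "is_functor B A K"
    and eta: "nat_iso A A (id, id) (fcomp K i) eta"
    and eps: "nat_iso B B (fcomp i K) (id, id) eps"
    and um: "igpd_mor A (Ut_Delta \<kappa>) u"
    and vm: "igpd_mor B (U_Delta \<kappa>) v"
    and c0: "\<forall>x \<in> gob A. fst p_Delta (fst u x) = fst v (fst i x)"
    and c1: "\<forall>f \<in> gar A. snd p_Delta (snd u f) = snd v (snd i f)"
begin

lemma GA: "groupoid A" using im by (simp add: igpd_mor_def igroupoid_def)
lemma GB: "groupoid B" using im by (simp add: igpd_mor_def igroupoid_def)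
lemma iF: "is_functor A B i" using im by (simp add: igpd_mor_def)
lemma uF: "is_functor A (Ut_Delta \<kappa>) u" using um by (simp add: igpd_mor_def)
lemma vF: "is_functor B (U_Delta \<kappa>) v" using vm by (simp add: igpd_mor_def)
lemma sB: "is_functor B B (sob B, sar B)" using im by (simp add: igpd_mor_def igroupoid_def)

definition pt :: "'bo \<Rightarrow> 'u" where
  "pt y = ar0 (snd v (eps y)) (tpt (fst u (fst K y)))"

definition H0 :: "'bo \<Rightarrow> 'u tobj" where
  "H0 y = addpt (fst v y) (pt y)"

definition H1 :: "'ba \<Rightarrow> 'u tarr" where
  "H1 g = (H0 (gdom B g), H0 (gcod B g), ar0 (snd v g), ar1 (snd v g))"

lemma u_ob: "x \<in> gob A \<Longrightarrow> fst u x = addpt (fst v (fst i x)) (tpt (fst u x)) \<and> tpt (fst u x) \<in> fst (fst v (fst i x))"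
proof -
  assume x: "x \<in> gob A"
  have "fst u x \<in> Ut_ob \<kappa>" using fun_ob[OF uF x] by simp
  then show ?thesis using Ut_ob_decomp c0 x by fastforce
qed

lemma v_hom: "g \<in> ghom B y y' \<Longrightarrow> snd v g \<in> ghom (U_Delta \<kappa>) (fst v y) (fst v y')"
  by (rule fun_hom[OF vF])

lemma u_hom_ar0: "k \<in> ghom A x x' \<Longrightarrow> ar0 (snd v (snd i k)) (tpt (fst u x)) = tpt (fst u x')"
proof -
  assume k: "k \<in> ghom A x x'"
  have "snd u k \<in> ghom (Ut_Delta \<kappa>) (fst u x) (fst u x')" using fun_hom[OF uF k] .
  then have "ar0 (snd u k) (tpt (fst u x)) = tpt (fst u x')" by (rule Ut_ghom_shape)
  moreover have "snd p_Delta (snd u k) = snd v (snd i k)" using c1 k by (simp add: ghom_iff)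
  ultimately show ?thesis using ar_p(1)[of "snd u k"] by simp
qed

lemma consistency:
  assumes x: "x \<in> gob A" and g: "g \<in> ghom B (fst i x) y"
  shows "ar0 (snd v g) (tpt (fst u x)) = pt y"
proof -
  have y: "y \<in> gob B" using gp_obj[OF GB g] by simp
  define x' where "x' = fst K y"
  have x': "x' \<in> gob A" unfolding x'_def using fun_ob[OF KF y] .
  have e: "eps y \<in> ghom B (fst i x') y" using nat_comp[OF eps y] by (simp add: x'_def)
  obtain e' where e': "e' \<in> ghom B y (fst i x')" "gcomp B (eps y) e' = gid B y"
    using gp_inv[OF GB e] by blast
  have c: "gcomp B e' g \<in> ghom B (fst i x) (fst i x')" using gp_comp[OF GB g e'(1)] .
  obtain k where k: "k \<in> ghom A x x'" "snd i k = gcomp B e' g"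
    using equiv_full[OF GA GB iF KF eta eps x x' c] by blast
  have "gcomp B (eps y) (gcomp B e' g) = gcomp B (gcomp B (eps y) e') g"
    using gp_assoc[OF GB g e'(1) e] .
  also have "\<dots> = g" using e'(2) gp_idl[OF GB g] by simp
  finally have gg: "g = gcomp B (eps y) (snd i k)" using k(2) by simp
  have ik: "snd i k \<in> ghom B (fst i x) (fst i x')" using k(2) c by simp
  have "snd v g = gcomp (U_Delta \<kappa>) (snd v (eps y)) (snd v (snd i k))"
    using gg fun_comp[OF vF ik e] by simp
  then have "ar0 (snd v g) = restrict (ar0 (snd v (eps y)) \<circ> ar0 (snd v (snd i k))) (fst (gdom (U_Delta \<kappa>) (snd v (snd i k))))"
    using ar0_U_comp by metis
  moreover have "gdom (U_Delta \<kappa>) (snd v (snd i k)) = fst v (fst i x)" using v_hom[OF ik] by (simp add: ghom_iff)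
  ultimately have "ar0 (snd v g) = restrict (ar0 (snd v (eps y)) \<circ> ar0 (snd v (snd i k))) (fst (fst v (fst i x)))"
    by simp
  then have "ar0 (snd v g) (tpt (fst u x)) = ar0 (snd v (eps y)) (ar0 (snd v (snd i k)) (tpt (fst u x)))"
    using u_ob[OF x] by simp
  also have "\<dots> = ar0 (snd v (eps y)) (tpt (fst u x'))" using u_hom_ar0[OF k(1)] by simp
  also have "\<dots> = pt y" by (simp add: pt_def x'_def)
  finally show ?thesis .
qed

end

lemma U_mor_maps0': "U_mor X Y r0 r1 \<Longrightarrow> a \<in> fst X \<Longrightarrow> r0 a \<in> fst Y"
  by (cases X; cases Y) (simp add: U_mor_maps0)

lemma Ut_ar_addpt: "(addpt X a, addpt Y b, r0, r1) \<in> Ut_ar \<kappa> \<longleftrightarrow>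
   X \<in> U_ob \<kappa> \<and> a \<in> fst X \<and> Y \<in> U_ob \<kappa> \<and> b \<in> fst Y \<and> U_mor X Y r0 r1 \<and> r0 a = b"
  by (cases X; cases Y) (auto simp: Ut_ar_iff Ut_ob_iff)

context lift_setup
begin

lemma eps_hom: "y \<in> gob B \<Longrightarrow> eps y \<in> ghom B (fst i (fst K y)) y"
  using nat_comp[OF eps] by simp

lemma Ky: "y \<in> gob B \<Longrightarrow> fst K y \<in> gob A"
  by (rule fun_ob[OF KF])

lemma pt_in: "y \<in> gob B \<Longrightarrow> pt y \<in> fst (fst v y)"
proof -
  assume y: "y \<in> gob B"
  have "snd v (eps y) \<in> ghom (U_Delta \<kappa>) (fst v (fst i (fst K y))) (fst v y)"
    using v_hom[OF eps_hom[OF y]] .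
  then have "U_mor (fst v (fst i (fst K y))) (fst v y) (ar0 (snd v (eps y))) (ar1 (snd v (eps y)))"
    by (rule U_ghom_shape)
  moreover have "tpt (fst u (fst K y)) \<in> fst (fst v (fst i (fst K y)))" using u_ob[OF Ky[OF y]] by simp
  ultimately show ?thesis unfolding pt_def by (rule U_mor_maps0')
qed

lemma v_ob: "y \<in> gob B \<Longrightarrow> fst v y \<in> U_ob \<kappa>"
  using fun_ob[OF vF] by simp

lemma H0_ob: "y \<in> gob B \<Longrightarrow> H0 y \<in> Ut_ob \<kappa>"
  unfolding H0_def by (rule addpt_Ut_ob[OF v_ob pt_in])

lemma iob: "x \<in> gob A \<Longrightarrow> fst i x \<in> gob B"
  by (rule fun_ob[OF iF])

lemma H0_i: "x \<in> gob A \<Longrightarrow> H0 (fst i x) = fst u x"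
proof -
  assume x: "x \<in> gob A"
  have g: "gid B (fst i x) \<in> ghom B (fst i x) (fst i x)" using gp_id[OF GB iob[OF x]] .
  have "ar0 (snd v (gid B (fst i x))) = restrict id (fst (fst v (fst i x)))"
    using fun_id[OF vF iob[OF x]] ar_U_id by simp
  then have "ar0 (snd v (gid B (fst i x))) (tpt (fst u x)) = tpt (fst u x)"
    using u_ob[OF x] by simp
  then have "pt (fst i x) = tpt (fst u x)" using consistency[OF x g] by simp
  then show ?thesis using u_ob[OF x] by (simp add: H0_def)
qed

lemma v_comp_ar0:
  assumes f: "f \<in> ghom B y1 y2" and g: "g \<in> ghom B y2 y3" and a: "a \<in> fst (fst v y1)"
  shows "ar0 (snd v (gcomp B g f)) a = ar0 (snd v g) (ar0 (snd v f) a)"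
proof -
  have "snd v (gcomp B g f) = gcomp (U_Delta \<kappa>) (snd v g) (snd v f)" using fun_comp[OF vF f g] .
  then have "ar0 (snd v (gcomp B g f)) = restrict (ar0 (snd v g) \<circ> ar0 (snd v f)) (fst (gdom (U_Delta \<kappa>) (snd v f)))"
    using ar0_U_comp by metis
  moreover have "gdom (U_Delta \<kappa>) (snd v f) = fst v y1" using v_hom[OF f] by (simp add: ghom_iff)
  ultimately show ?thesis using a by simp
qed

lemma H1_pt:
  assumes g: "g \<in> ghom B y y'"
  shows "ar0 (snd v g) (pt y) = pt y'"
proof -
  have y: "y \<in> gob B" using gp_obj[OF GB g] by simp
  have e: "eps y \<in> ghom B (fst i (fst K y)) y" using eps_hom[OF y] .
  have t: "tpt (fst u (fst K y)) \<in> fst (fst v (fst i (fst K y)))" using u_ob[OF Ky[OF y]] by simp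
  have "ar0 (snd v g) (pt y) = ar0 (snd v (gcomp B g (eps y))) (tpt (fst u (fst K y)))"
    unfolding pt_def using v_comp_ar0[OF e g t] by simp
  also have "\<dots> = pt y'" using consistency[OF Ky[OF y] gp_comp[OF GB e g]] .
  finally show ?thesis .
qed

lemma H1_hom:
  assumes g: "g \<in> ghom B y y'"
  shows "H1 g \<in> ghom (Ut_Delta \<kappa>) (H0 y) (H0 y')"
proof -
  have y: "y \<in> gob B" "y' \<in> gob B" using gp_obj[OF GB g] by simp_all
  have vg: "snd v g \<in> ghom (U_Delta \<kappa>) (fst v y) (fst v y')" using v_hom[OF g] .
  have m: "U_mor (fst v y) (fst v y') (ar0 (snd v g)) (ar1 (snd v g))" using U_ghom_shape(2)[OF vg] .
  have dc: "gdom B g = y" "gcod B g = y'" using g by (simp_all add: ghom_iff)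
  have "(addpt (fst v y) (pt y), addpt (fst v y') (pt y'), ar0 (snd v g), ar1 (snd v g)) \<in> Ut_ar \<kappa>"
    unfolding Ut_ar_addpt using v_ob[OF y(1)] v_ob[OF y(2)] pt_in[OF y(1)] pt_in[OF y(2)] m H1_pt[OF g]
    by simp
  then show ?thesis by (simp add: H1_def H0_def dc ghom_iff)
qed

end

lemma U_mor_comm: "U_mor X Y r0 r1 \<Longrightarrow> a \<in> fst X \<Longrightarrow> snd (snd Y) (r0 a) = r1 (snd (snd X) a)"
  by (cases X; cases Y) (simp add: U_mor_iff)

lemma addpt_fst[simp]: "fst (addpt X a) = fst X" "fst (snd (addpt X a)) = fst (snd X)"
  by (simp_all add: addpt_def)

lemma tpt_addpt[simp]: "tpt (addpt X a) = a" by (simp add: addpt_def tpt_def)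

context lift_setup
begin

lemma sA: "is_functor A A (sob A, sar A)" using im by (simp add: igpd_mor_def igroupoid_def)

lemma H1_comp:
  assumes f: "f \<in> gar B" and g: "g \<in> gar B" and c: "gcod B f = gdom B g"
  shows "H1 (gcomp B g f) = gcomp (Ut_Delta \<kappa>) (H1 g) (H1 f)"
proof -
  have f': "f \<in> ghom B (gdom B f) (gcod B f)" using gp_ar[OF f] .
  have g': "g \<in> ghom B (gcod B f) (gcod B g)" using gp_ar[OF g] c by simp
  have gf: "gcomp B g f \<in> ghom B (gdom B f) (gcod B g)" using gp_comp[OF GB f' g'] .
  have vv: "snd v (gcomp B g f) = gcomp (U_Delta \<kappa>) (snd v g) (snd v f)" using fun_comp[OF vF f' g'] .
  have dvf: "gdom (U_Delta \<kappa>) (snd v f) = fst v (gdom B f)" using v_hom[OF f'] by (simp add: ghom_iff)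
  have a0: "ar0 (snd v (gcomp B g f)) = restrict (ar0 (snd v g) \<circ> ar0 (snd v f)) (fst (fst v (gdom B f)))"
    using vv ar0_U_comp[of \<kappa> "snd v g" "snd v f"] dvf by simp
  have a1: "ar1 (snd v (gcomp B g f)) = restrict (ar1 (snd v g) \<circ> ar1 (snd v f)) (fst (snd (fst v (gdom B f))))"
    using vv ar1_U_comp[of \<kappa> "snd v g" "snd v f"] dvf by simp
  have "H1 (gcomp B g f) = (H0 (gdom B f), H0 (gcod B g), ar0 (snd v (gcomp B g f)), ar1 (snd v (gcomp B g f)))"
    using gf by (simp add: H1_def ghom_iff)
  also have "\<dots> = gcomp (Ut_Delta \<kappa>) (H1 g) (H1 f)"
    unfolding a0 a1 by (simp add: H1_def H0_def)
  finally show ?thesis .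
qed

lemma H1_id: "y \<in> gob B \<Longrightarrow> H1 (gid B y) = gid (Ut_Delta \<kappa>) (H0 y)"
proof -
  assume y: "y \<in> gob B"
  have g: "gid B y \<in> ghom B y y" using gp_id[OF GB y] .
  have "snd v (gid B y) = gid (U_Delta \<kappa>) (fst v y)" using fun_id[OF vF y] by simp
  then show ?thesis using g by (simp add: H1_def ghom_iff H0_def)
qed

lemma H_functor: "is_functor B (Ut_Delta \<kappa>) (H0, H1)"
  unfolding is_functor_def
proof (intro conjI ballI impI)
  fix x assume "x \<in> gob B"
  then show "fst (H0, H1) x \<in> gob (Ut_Delta \<kappa>)" using H0_ob by simp
  show "snd (H0, H1) (gid B x) = gid (Ut_Delta \<kappa>) (fst (H0, H1) x)" using H1_id[OF \<open>x \<in> gob B\<close>] by simp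
next
  fix f assume "f \<in> gar B"
  then show "snd (H0, H1) f \<in> ghom (Ut_Delta \<kappa>) (fst (H0, H1) (gdom B f)) (fst (H0, H1) (gcod B f))"
    using H1_hom[OF gp_ar] by simp
next
  fix f g assume "f \<in> gar B" "g \<in> gar B" "gcod B f = gdom B g"
  then show "snd (H0, H1) (gcomp B g f) = gcomp (Ut_Delta \<kappa>) (snd (H0, H1) g) (snd (H0, H1) f)"
    using H1_comp by simp
qed

lemma pt_sob: "y \<in> gob B \<Longrightarrow> pt (sob B y) = snd (snd (fst v y)) (pt y)"
proof -
  assume y: "y \<in> gob B"
  define x' where "x' = fst K y"
  have x': "x' \<in> gob A" unfolding x'_def using Ky[OF y] .
  have e: "eps y \<in> ghom B (fst i x') y" using eps_hom[OF y] by (simp add: x'_def)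
  have se: "sar B (eps y) \<in> ghom B (sob B (fst i x')) (sob B y)" using fun_hom[OF sB e] by simp
  have "sob B (fst i x') = fst i (sob A x')" using im x' by (simp add: igpd_mor_def)
  then have se': "sar B (eps y) \<in> ghom B (fst i (sob A x')) (sob B y)" using se by simp
  have sx: "sob A x' \<in> gob A" using fun_ob[OF sA x'] by simp
  have c: "ar0 (snd v (sar B (eps y))) (tpt (fst u (sob A x'))) = pt (sob B y)"
    using consistency[OF sx se'] .
  have "e \<in> gar B" if "e \<in> ghom B a b" for e a b using that by (simp add: ghom_iff)
  then have "snd v (sar B (eps y)) = sar (U_Delta \<kappa>) (snd v (eps y))" using vm e by (simp add: igpd_mor_def)
  then have c1: "ar0 (snd v (sar B (eps y))) = ar1 (snd v (eps y))" by (simp add: ar_U_sar)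
  have "fst u (sob A x') = Ut_sob (fst u x')" using um x' by (simp add: igpd_mor_def)
  also have "\<dots> = Ut_sob (addpt (fst v (fst i x')) (tpt (fst u x')))" using u_ob[OF x'] by metis
  finally have "tpt (fst u (sob A x')) = snd (snd (fst v (fst i x'))) (tpt (fst u x'))"
    by (simp add: Ut_sob_addpt)
  then have "pt (sob B y) = ar1 (snd v (eps y)) (snd (snd (fst v (fst i x'))) (tpt (fst u x')))"
    using c c1 by simp
  also have "\<dots> = snd (snd (fst v y)) (ar0 (snd v (eps y)) (tpt (fst u x')))"
    using U_mor_comm[OF U_ghom_shape(2)[OF v_hom[OF e]]] u_ob[OF x'] by simp
  also have "\<dots> = snd (snd (fst v y)) (pt y)" by (simp add: pt_def x'_def)
  finally show ?thesis .
qed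

lemma H0_sob: "y \<in> gob B \<Longrightarrow> H0 (sob B y) = Ut_sob (H0 y)"
proof -
  assume y: "y \<in> gob B"
  have "fst v (sob B y) = U_sob (fst v y)" using vm y by (simp add: igpd_mor_def)
  then show ?thesis using pt_sob[OF y] by (simp add: H0_def Ut_sob_addpt)
qed

lemma H1_sar: "f \<in> gar B \<Longrightarrow> H1 (sar B f) = sar (Ut_Delta \<kappa>) (H1 f)"
proof -
  assume f: "f \<in> gar B"
  have f': "f \<in> ghom B (gdom B f) (gcod B f)" using gp_ar[OF f] .
  have sf: "sar B f \<in> ghom B (sob B (gdom B f)) (sob B (gcod B f))" using fun_hom[OF sB f'] by simp
  have ob: "gdom B f \<in> gob B" "gcod B f \<in> gob B" using gp_obj[OF GB f'] by simp_all
  have "snd v (sar B f) = sar (U_Delta \<kappa>) (snd v f)" using vm f by (simp add: igpd_mor_def)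
  then have a: "ar0 (snd v (sar B f)) = ar1 (snd v f)" "ar1 (snd v (sar B f)) = ar0 (snd v f)"
    by (simp_all add: ar_U_sar)
  show ?thesis using sf a H0_sob[OF ob(1)] H0_sob[OF ob(2)] by (simp add: H1_def ghom_iff)
qed

lemma H_mor: "igpd_mor B (Ut_Delta \<kappa>) (H0, H1)"
  unfolding igpd_mor_def
  using im Ut_igroupoid H_functor H0_sob H1_sar by (simp add: igpd_mor_def)

lemma H_i_ar: "f \<in> gar A \<Longrightarrow> H1 (snd i f) = snd u f"
proof -
  assume f: "f \<in> gar A"
  have f': "f \<in> ghom A (gdom A f) (gcod A f)" using gp_ar[OF f] .
  have ob: "gdom A f \<in> gob A" "gcod A f \<in> gob A" using gp_obj[OF GA f'] by simp_all
  have if': "snd i f \<in> ghom B (fst i (gdom A f)) (fst i (gcod A f))" using fun_hom[OF iF f'] .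
  have uf: "snd u f \<in> ghom (Ut_Delta \<kappa>) (fst u (gdom A f)) (fst u (gcod A f))" using fun_hom[OF uF f'] .
  have p: "snd p_Delta (snd u f) = snd v (snd i f)" using c1 f by simp
  have "H1 (snd i f) = (fst u (gdom A f), fst u (gcod A f), ar0 (snd u f), ar1 (snd u f))"
    using if' H0_i[OF ob(1)] H0_i[OF ob(2)] ar_p[of "snd u f"] p by (simp add: H1_def ghom_iff)
  also have "\<dots> = snd u f" using Ut_ghom_shape(1)[OF uf] by simp
  finally show ?thesis .
qed

lemma H_p_ar: "g \<in> gar B \<Longrightarrow> snd p_Delta (H1 g) = snd v g"
proof -
  assume g: "g \<in> gar B"
  have vg: "snd v g \<in> ghom (U_Delta \<kappa>) (fst v (gdom B g)) (fst v (gcod B g))" using v_hom[OF gp_ar[OF g]] .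
  show ?thesis using U_ghom_shape(1)[OF vg] by (simp add: H1_def H0_def)
qed

lemma H_p_ob: "fst p_Delta (H0 y) = fst v y"
  by (simp add: H0_def)

end

theorem lemma5p14:
  fixes \<kappa> :: "'k rel"
    and A :: "('ao, 'aa) igpd" and B :: "('bo, 'ba) igpd"
    and i :: "('ao \<Rightarrow> 'bo) \<times> ('aa \<Rightarrow> 'ba)"
  assumes "inaccessible \<kappa>"
  shows "igpd_mor (Ut_Delta \<kappa> :: ('u tobj, 'u tarr) igpd) (U_Delta \<kappa>) p_Delta \<and>
         (inj_equiv A B i \<longrightarrow> has_rlp A B i (Ut_Delta \<kappa> :: ('u tobj, 'u tarr) igpd) (U_Delta \<kappa>) p_Delta)"
proof (intro conjI impI)
  show "igpd_mor (Ut_Delta \<kappa> :: ('u tobj, 'u tarr) igpd) (U_Delta \<kappa>) p_Delta" by (rule p_mor)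
next
  assume ie: "inj_equiv A B i"
  then have im: "igpd_mor A B i" and ge: "gpd_equivalence A B i" by (simp_all add: inj_equiv_def)
  from ge obtain K eta eps where KF: "is_functor B A K" and eta: "nat_iso A A (id, id) (fcomp K i) eta"
    and eps: "nat_iso B B (fcomp i K) (id, id) eps"
    unfolding gpd_equivalence_def by blast
  show "has_rlp A B i (Ut_Delta \<kappa> :: ('u tobj, 'u tarr) igpd) (U_Delta \<kappa>) p_Delta"
    unfolding has_rlp_def
  proof (intro allI impI)
    fix u :: "('ao \<Rightarrow> 'u tobj) \<times> ('aa \<Rightarrow> 'u tarr)" and v :: "('bo \<Rightarrow> 'u uobj) \<times> ('ba \<Rightarrow> 'u uarr)"
    assume um: "igpd_mor A (Ut_Delta \<kappa>) u" and vm: "igpd_mor B (U_Delta \<kappa>) v"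
      and c0: "\<forall>x \<in> gob A. fst p_Delta (fst u x) = fst v (fst i x)"
      and c1: "\<forall>f \<in> gar A. snd p_Delta (snd u f) = snd v (snd i f)"
    interpret L: lift_setup \<kappa> A B i K eta eps u v
      using im KF eta eps um vm c0 c1 by unfold_locales
    show "\<exists>h. igpd_mor B (Ut_Delta \<kappa>) h \<and>
           (\<forall>x \<in> gob A. fst h (fst i x) = fst u x) \<and>
           (\<forall>f \<in> gar A. snd h (snd i f) = snd u f) \<and>
           (\<forall>y \<in> gob B. fst p_Delta (fst h y) = fst v y) \<and>
           (\<forall>g \<in> gar B. snd p_Delta (snd h g) = snd v g)"
    proof (rule exI[of _ "(L.H0, L.H1)"], intro conjI ballI)
      show "igpd_mor B (Ut_Delta \<kappa>) (L.H0, L.H1)" by (rule L.H_mor)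
    next
      fix x assume "x \<in> gob A" then show "fst (L.H0, L.H1) (fst i x) = fst u x" using L.H0_i by simp
    next
      fix f assume "f \<in> gar A" then show "snd (L.H0, L.H1) (snd i f) = snd u f" using L.H_i_ar by simp
    next
      fix y show "fst p_Delta (fst (L.H0, L.H1) y) = fst v y" using L.H_p_ob[of y] by simp
    next
      fix g assume "g \<in> gar B" then show "snd p_Delta (snd (L.H0, L.H1) g) = snd v g" using L.H_p_ar by simp
    qed
  qed
qed

end
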